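(* Let $(X,\|\cdot\|_X)$ be a Banach space, $\mathcal{K}\subset X$ compact, and $\gamma\ge2\,\mathrm{rad}(\mathcal{K})$. (i) Let $\alpha>0$, $\beta\in\mathbb{R}$. If $\varepsilon_n(\mathcal{K})_X\le C\frac{(\log_2n)^\beta}{n^\alpha}$ for all $n\ge2$, then $d_n^\gamma(\mathcal{K})_X\le C\frac{(\log_2n)^\beta}{n^\alpha}$ for all $n\ge2$. If $\varepsilon_n(\mathcal{K})_X\ge C\frac{(\log_2n)^\beta}{n^\alpha}$ for all $n\ge2$ (with $C>0$), then there is $C'>0$ with $d_n^\gamma(\mathcal{K})_X\ge C'\frac{(\log_2n)^\beta}{n^\alpha(\log_2n)^\alpha}$ for all $n\ge2$. (ii) Let $\alpha>0$. If $\varepsilon_n(\mathcal{K})_X\asymp(\log_2n)^{-\alpha}$ for $n\ge2$, then $d_n^\gamma(\mathcal{K})_X\asymp(\log_2n)^{-\alpha}$ for $n\ge2$. (iii) Let $0<\alpha<1$. If $\varepsilon_n(\mathcal{K})_X\le C2^{-cn^\alpha}$ for $n=1,2,\dots$, then $d_n^\gamma(\mathcal{K})_X\le C2^{-cn^\alpha}$ for $n=1,2,\dots$. If $\varepsilon_n(\mathcal{K})_X\ge C2^{-cn^\alpha}$ for $n=1,2,\dots$ (with $C,c>0$), then there are $C',c'>0$ with $d_n^\gamma(\mathcal{K})_X\ge C'2^{-c'n^{\alpha/(1-\alpha)}}$ for $n=1,2,\dots$.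
   Context: $a_n\asymp b_n$ means there are constants $0<c\le C$ independent of $n$ with $cb_n\le a_n\le Cb_n$. $\mathrm{rad}(\mathcal{K})=\inf_{g\in X}\sup_{f\in\mathcal{K}}\|f-g\|_X$. For $m\ge0$, the entropy number $\varepsilon_m(\mathcal{K})_X$ is the infimum of all $\varepsilon>0$ such that $\mathcal{K}$ is covered by $2^m$ closed balls of radius $\varepsilon$ with centers in $X$. For $k\ge1$ and a norm $\|\cdot\|_{Y_k}$ on $\mathbb{R}^k$ let $B_{Y_k}=\{y\in\mathbb{R}^k:\|y\|_{Y_k}\le1\}$. For $\gamma\ge0$, the fixed Lipschitz width is $d^\gamma(\mathcal{K},Y_k)_X=\inf_{\Phi}\sup_{f\in\mathcal{K}}\inf_{y\in B_{Y_k}}\|f-\Phi(y)\|_X$, the infimum over all maps $\Phi:B_{Y_k}\to X$ with $\|\Phi(y)-\Phi(y')\|_X\le\gamma\|y-y'\|_{Y_k}$ for all $y,y'\in B_{Y_k}$. The Lipschitz width is $d_n^\gamma(\mathcal{K})_X=\inf_{1\le k\le n}\inf_{\|\cdot\|_{Y_k}}d^\gamma(\mathcal{K},Y_k)_X$, the inner infimum over all norms on $\mathbb{R}^k$. *)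

theory Defs
  imports "HOL-Analysis.Analysis"
begin

text \<open>Suprema of nonnegative quantities; the 0 inserted makes the supremum over the
  empty set equal to 0 and does not change it otherwise.\<close>

definition rad :: "'a::real_normed_vector set \<Rightarrow> real" where
  "rad K = Inf ((\<lambda>g. Sup (insert 0 ((\<lambda>f. norm (f - g)) ` K))) ` UNIV)"

definition entropy_number :: "'a::real_normed_vector set \<Rightarrow> nat \<Rightarrow> real" where
  "entropy_number K m = Inf {eps. eps > 0 \<and>
      (\<exists>S. finite S \<and> card S \<le> 2 ^ m \<and> K \<subseteq> (\<Union>c\<in>S. cball c eps))}"

text \<open>R^k is modelled as the functions nat => real vanishing outside {0..<k}.\<close>
definition Rk :: "nat \<Rightarrow> (nat \<Rightarrow> real) set" where
  "Rk k = {y. \<forall>i\<ge>k. y i = 0}"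

definition is_norm_on_Rk :: "nat \<Rightarrow> ((nat \<Rightarrow> real) \<Rightarrow> real) \<Rightarrow> bool" where
  "is_norm_on_Rk k N \<longleftrightarrow>
     (\<forall>y\<in>Rk k. N y \<ge> 0 \<and> (N y = 0 \<longleftrightarrow> y = (\<lambda>_. 0))) \<and>
     (\<forall>a. \<forall>y\<in>Rk k. N (\<lambda>i. a * y i) = \<bar>a\<bar> * N y) \<and>
     (\<forall>y\<in>Rk k. \<forall>z\<in>Rk k. N (\<lambda>i. y i + z i) \<le> N y + N z)"

definition unit_ball_Rk :: "nat \<Rightarrow> ((nat \<Rightarrow> real) \<Rightarrow> real) \<Rightarrow> (nat \<Rightarrow> real) set" where
  "unit_ball_Rk k N = {y \<in> Rk k. N y \<le> 1}"

definition fixed_lipschitz_width ::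
    "real \<Rightarrow> 'a::real_normed_vector set \<Rightarrow> nat \<Rightarrow> ((nat \<Rightarrow> real) \<Rightarrow> real) \<Rightarrow> real" where
  "fixed_lipschitz_width \<gamma> K k N = Inf
     {Sup (insert 0 ((\<lambda>f. Inf ((\<lambda>y. norm (f - \<Phi> y)) ` unit_ball_Rk k N)) ` K)) | \<Phi>.
        \<forall>y\<in>unit_ball_Rk k N. \<forall>y'\<in>unit_ball_Rk k N.
           norm (\<Phi> y - \<Phi> y') \<le> \<gamma> * N (\<lambda>i. y i - y' i)}"

definition lipschitz_width :: "real \<Rightarrow> 'a::real_normed_vector set \<Rightarrow> nat \<Rightarrow> real" where
  "lipschitz_width \<gamma> K n = Inf
     {fixed_lipschitz_width \<gamma> K k N | k N. 1 \<le> k \<and> k \<le> n \<and> is_norm_on_Rk k N}"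

end

theory Submission
  imports Defs "Jordan_Normal_Form.Determinant" "HOL-Real_Asymp.Real_Asymp"
begin

definition unitv :: "nat \<Rightarrow> nat \<Rightarrow> real" where
  "unitv i = (\<lambda>j. if j = i then 1 else 0)"

lemma Rk_add: "y \<in> Rk k \<Longrightarrow> z \<in> Rk k \<Longrightarrow> (\<lambda>i. y i + z i) \<in> Rk k"
  and Rk_diff: "y \<in> Rk k \<Longrightarrow> z \<in> Rk k \<Longrightarrow> (\<lambda>i. y i - z i) \<in> Rk k"
  and Rk_scale: "y \<in> Rk k \<Longrightarrow> (\<lambda>i. a * y i) \<in> Rk k"
  and Rk_zero: "(\<lambda>_. 0) \<in> Rk k"
  and Rk_unitv: "i < k \<Longrightarrow> unitv i \<in> Rk k"
  by (auto simp: Rk_def unitv_def)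

lemma Rk_sum: "(\<And>i. i \<in> I \<Longrightarrow> u i \<in> Rk k) \<Longrightarrow> (\<lambda>j. \<Sum>i\<in>I. c i * u i j) \<in> Rk k"
  by (auto simp: Rk_def)

context
  fixes k N assumes nN: "is_norm_on_Rk k N"
begin

lemma N_nonneg: "y \<in> Rk k \<Longrightarrow> N y \<ge> 0"
  using nN by (auto simp: is_norm_on_Rk_def)

lemma N_eq0: "y \<in> Rk k \<Longrightarrow> N y = 0 \<longleftrightarrow> y = (\<lambda>_. 0)"
  using nN by (auto simp: is_norm_on_Rk_def)

lemma N_scale: "y \<in> Rk k \<Longrightarrow> N (\<lambda>i. a * y i) = \<bar>a\<bar> * N y"
  using nN by (auto simp: is_norm_on_Rk_def)

lemma N_add: "y \<in> Rk k \<Longrightarrow> z \<in> Rk k \<Longrightarrow> N (\<lambda>i. y i + z i) \<le> N y + N z"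
  using nN by (auto simp: is_norm_on_Rk_def)

lemma N_zero: "N (\<lambda>_. 0) = 0"
  using N_eq0[OF Rk_zero] by simp

lemma N_diff_commute: "y \<in> Rk k \<Longrightarrow> z \<in> Rk k \<Longrightarrow> N (\<lambda>i. y i - z i) = N (\<lambda>i. z i - y i)"
  using N_scale[OF Rk_diff[of y k z], of "-1"] by simp

lemma N_diff_tri: "x \<in> Rk k \<Longrightarrow> y \<in> Rk k \<Longrightarrow> z \<in> Rk k \<Longrightarrow>
   N (\<lambda>i. x i - z i) \<le> N (\<lambda>i. x i - y i) + N (\<lambda>i. y i - z i)"
  using N_add[OF Rk_diff[of x k y] Rk_diff[of y k z]] by simp

lemma N_rev_tri: "y \<in> Rk k \<Longrightarrow> z \<in> Rk k \<Longrightarrow> \<bar>N y - N z\<bar> \<le> N (\<lambda>i. y i - z i)"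
proof -
  assume y: "y \<in> Rk k" and z: "z \<in> Rk k"
  have "N y \<le> N (\<lambda>i. y i - z i) + N z"
    using N_add[OF Rk_diff[OF y z] z] by simp
  moreover have "N z \<le> N (\<lambda>i. z i - y i) + N y"
    using N_add[OF Rk_diff[OF z y] y] by simp
  ultimately show ?thesis using N_diff_commute[OF y z] by linarith
qed

lemma N_sum_le:
  assumes "finite I" "\<And>i. i \<in> I \<Longrightarrow> u i \<in> Rk k"
  shows "N (\<lambda>j. \<Sum>i\<in>I. c i * u i j) \<le> (\<Sum>i\<in>I. \<bar>c i\<bar> * N (u i))"
  using assms
proof (induction I rule: finite_induct)
  case empty
  then show ?case using N_zero by simp
next
  case (insert a F)
  have "N (\<lambda>j. \<Sum>i\<in>insert a F. c i * u i j) = N (\<lambda>j. c a * u a j + (\<Sum>i\<in>F. c i * u i j))"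
    using insert by simp
  also have "\<dots> \<le> N (\<lambda>j. c a * u a j) + N (\<lambda>j. \<Sum>i\<in>F. c i * u i j)"
    using N_add[OF Rk_scale[of "u a" k "c a"] Rk_sum[of F u k c]] insert by auto
  also have "\<dots> \<le> \<bar>c a\<bar> * N (u a) + (\<Sum>i\<in>F. \<bar>c i\<bar> * N (u i))"
    using N_scale[of "u a" "c a"] insert by auto
  also have "\<dots> = (\<Sum>i\<in>insert a F. \<bar>c i\<bar> * N (u i))" using insert by simp
  finally show ?case .
qed

lemma Rk_expand: "y \<in> Rk k \<Longrightarrow> y = (\<lambda>j. \<Sum>i\<in>{..<k}. y i * unitv i j)"
proof
  fix x assume y: "y \<in> Rk k"
  have "(\<Sum>i\<in>{..<k}. y i * unitv i x) = (\<Sum>i\<in>{..<k}. if x = i then y i else 0)"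
    by (rule sum.cong) (auto simp: unitv_def)
  also have "\<dots> = (if x \<in> {..<k} then y x else 0)" by (simp add: sum.delta)
  also have "\<dots> = y x" using y by (auto simp: Rk_def)
  finally show "y x = (\<Sum>i\<in>{..<k}. y i * unitv i x)" by simp
qed

lemma N_coord_bound: "y \<in> Rk k \<Longrightarrow> N y \<le> (\<Sum>i<k. \<bar>y i\<bar> * N (unitv i))"
  using N_sum_le[of "{..<k}" unitv y] Rk_expand[of y] Rk_unitv by auto

end

lemma N_cont:
  assumes nN: "is_norm_on_Rk k N"
  shows "continuous_on (Rk k) N"
  unfolding continuous_on_topological
proof (intro ballI allI impI)
  fix x B assume x: "x \<in> Rk k" and B: "open B" "N x \<in> B"
  obtain e where e: "e > 0" "ball (N x) e \<subseteq> B" using B openE by blast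
  define S where "S = (\<Sum>i<k. N (unitv i))"
  have S0: "S \<ge> 0" unfolding S_def using N_nonneg[OF nN] Rk_unitv by (auto intro!: sum_nonneg)
  define d where "d = e / (S + 1)"
  have d: "d > 0" using e S0 by (auto simp: d_def)
  define A where "A = (\<Inter>i\<in>{..<k}. (\<lambda>z::nat\<Rightarrow>real. z i) -` ball (x i) d)"
  have "open A" unfolding A_def
    by (intro open_INT ballI open_vimage) (auto intro: continuous_on_product_coordinates)
  moreover have "x \<in> A" using d by (auto simp: A_def)
  moreover have "N z \<in> B" if z: "z \<in> Rk k" "z \<in> A" for z
  proof -
    have "\<bar>N z - N x\<bar> \<le> N (\<lambda>i. z i - x i)" by (rule N_rev_tri[OF nN z(1) x])
    also have "\<dots> \<le> (\<Sum>i<k. \<bar>z i - x i\<bar> * N (unitv i))"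
      by (rule N_coord_bound[OF nN Rk_diff[OF z(1) x]])
    also have "\<dots> \<le> (\<Sum>i<k. d * N (unitv i))"
    proof (rule sum_mono)
      fix i assume i: "i \<in> {..<k}"
      have "\<bar>z i - x i\<bar> \<le> d" using z(2) i by (auto simp: A_def dist_real_def abs_minus_commute) (meson less_eq_real_def lessThan_iff)
      then show "\<bar>z i - x i\<bar> * N (unitv i) \<le> d * N (unitv i)"
        using N_nonneg[OF nN Rk_unitv[of i k]] i by (auto intro: mult_right_mono)
    qed
    also have "\<dots> = d * S" by (simp add: S_def sum_distrib_left)
    also have "\<dots> < e" using e S0 by (simp add: d_def field_simps)
    finally have "dist (N z) (N x) < e" by (simp add: dist_real_def)
    then show ?thesis using e by (auto simp: dist_commute)
  qed
  ultimately show "\<exists>A. open A \<and> x \<in> A \<and> (\<forall>y\<in>Rk k. y \<in> A \<longrightarrow> N y \<in> B)" by blast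
qed

lemma coord_bound:
  assumes nN: "is_norm_on_Rk k N"
  shows "\<exists>R>0. \<forall>y\<in>Rk k. \<forall>i. \<bar>y i\<bar> \<le> R * N y"
proof (cases "k = 0")
  case True
  then show ?thesis using N_nonneg[OF nN] by (intro exI[of _ 1]) (auto simp: Rk_def)
next
  case False
  define X where "X i = (if i < k then {-1..1::real} else {0})" for i
  define S where "S = PiE UNIV X \<inter> (\<Union>i<k. {y::nat\<Rightarrow>real. \<bar>y i\<bar> = 1})"
  have "compactin (product_topology (\<lambda>_. euclidean) UNIV) (PiE UNIV X)"
  proof -
    have "compact (X i)" for i by (simp add: X_def)
    then show ?thesis unfolding compactin_PiE by simp
  qed
  then have c1: "compact (PiE UNIV X)"
    by (simp add: euclidean_product_topology)
  have c2: "closed (\<Union>i<k. {y::nat\<Rightarrow>real. \<bar>y i\<bar> = 1})"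
  proof (intro closed_UN ballI finite_lessThan)
    fix i
    have "continuous_on UNIV (\<lambda>y::nat\<Rightarrow>real. \<bar>y i\<bar>)"
      by (intro continuous_on_rabs continuous_on_product_coordinates)
    then show "closed {y::nat\<Rightarrow>real. \<bar>y i\<bar> = 1}"
      by (intro closed_Collect_eq) auto
  qed
  have cS: "compact S" unfolding S_def using c1 c2 by (rule compact_Int_closed)
  have SR: "S \<subseteq> Rk k"
  proof
    fix y assume "y \<in> S"
    then have "y i \<in> X i" for i by (auto simp: S_def PiE_def)
    then show "y \<in> Rk k" by (auto simp: Rk_def X_def) (metis not_le singletonD)
  qed
  have "(\<lambda>i. if i = 0 then 1 else 0) \<in> S" using False by (auto simp: S_def X_def)
  then have Sne: "S \<noteq> {}" by blast
  have cont: "continuous_on S N" using N_cont[OF nN] SR continuous_on_subset by blast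
  obtain y0 where y0: "y0 \<in> S" "\<And>y. y \<in> S \<Longrightarrow> N y0 \<le> N y"
    using continuous_attains_inf[OF cS Sne cont] by blast
  have "y0 \<noteq> (\<lambda>_. 0)" using y0(1) by (auto simp: S_def)
  then have m: "N y0 > 0" using N_eq0[OF nN] N_nonneg[OF nN] SR y0(1) by force
  show ?thesis
  proof (intro exI[of _ "1 / N y0"] conjI ballI allI)
    show "1 / N y0 > 0" using m by simp
    fix y i assume y: "y \<in> Rk k"
    show "\<bar>y i\<bar> \<le> 1 / N y0 * N y"
    proof (cases "y = (\<lambda>_. 0)")
      case True then show ?thesis by (simp add: N_zero[OF nN])
    next
      case yn: False
      define t where "t = Max ((\<lambda>j. \<bar>y j\<bar>) ` {..<k})"
      have fin: "finite ((\<lambda>j. \<bar>y j\<bar>) ` {..<k})" "(\<lambda>j. \<bar>y j\<bar>) ` {..<k} \<noteq> {}" using False by auto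
      have tge: "\<bar>y j\<bar> \<le> t" if "j < k" for j using that fin by (auto simp: t_def)
      obtain j0 where j0: "j0 < k" "\<bar>y j0\<bar> = t" using Max_in[OF fin] by (auto simp: t_def)
      obtain j1 where "y j1 \<noteq> 0" using yn by auto
      then have "j1 < k" using y by (auto simp: Rk_def) (metis not_le)
      then have tpos: "t > 0" using tge[of j1] \<open>y j1 \<noteq> 0\<close> by auto
      define z where "z = (\<lambda>j. (1 / t) * y j)"
      have "z \<in> S"
      proof -
        have "z j \<in> X j" for j
        proof (cases "j < k")
          case True
          then have "\<bar>y j\<bar> \<le> t" by (rule tge)
          then have "\<bar>z j\<bar> \<le> 1" using tpos by (simp add: z_def abs_mult)
          then show ?thesis using True by (simp add: X_def abs_le_iff)
        next
          case False
          then show ?thesis using y by (simp add: X_def z_def Rk_def)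
        qed
        then have "z \<in> PiE UNIV X" by (auto simp: PiE_def)
        moreover have "\<bar>z j0\<bar> = 1" using j0 tpos by (simp add: z_def abs_mult)
        ultimately show ?thesis using j0 by (auto simp: S_def)
      qed
      then have "N y0 \<le> N z" using y0 by auto
      also have "N z = (1 / t) * N y" unfolding z_def using N_scale[OF nN y, of "1/t"] tpos by simp
      finally have "t * N y0 \<le> N y" using tpos by (simp add: field_simps)
      moreover have "\<bar>y i\<bar> \<le> t"
        using tge[of i] y tpos by (cases "i < k") (auto simp: Rk_def)
      ultimately have "\<bar>y i\<bar> * N y0 \<le> N y"
        using m mult_right_mono[of "\<bar>y i\<bar>" t "N y0"] by linarith
      then show ?thesis using m by (simp add: field_simps)
    qed
  qed
qed

definition colf :: "nat \<Rightarrow> real mat \<Rightarrow> nat \<Rightarrow> nat \<Rightarrow> real" where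
  "colf k M j = (\<lambda>i. if i < k then M $$ (i, j) else 0)"

lemma colf_Rk: "colf k M j \<in> Rk k" by (auto simp: colf_def Rk_def)

lemma det_abs_bound:
  fixes M :: "real mat"
  assumes M: "M \<in> carrier_mat k k" and b: "\<And>i j. i < k \<Longrightarrow> j < k \<Longrightarrow> \<bar>M $$ (i, j)\<bar> \<le> R"
  shows "\<bar>det M\<bar> \<le> real (card {p. p permutes {0..<k}}) * R ^ k"
proof -
  have R0: "R \<ge> 0" if "k > 0" using b[of 0 0] that by auto
  have "\<bar>det M\<bar> = \<bar>\<Sum>p\<in>{p. p permutes {0..<k}}. signof p * (\<Prod>i = 0..<k. M $$ (i, p i))\<bar>"
    by (simp add: det_def'[OF M])
  also have "\<dots> \<le> (\<Sum>p\<in>{p. p permutes {0..<k}}. \<bar>signof p * (\<Prod>i = 0..<k. M $$ (i, p i))\<bar>)"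
    by (rule sum_abs)
  also have "\<dots> \<le> (\<Sum>p\<in>{p. p permutes {0..<k}}. R ^ k)"
  proof (rule sum_mono)
    fix p assume p: "p \<in> {p. p permutes {0..<k}}"
    have "\<bar>signof p * (\<Prod>i = 0..<k. M $$ (i, p i))\<bar> = (\<Prod>i = 0..<k. \<bar>M $$ (i, p i)\<bar>)"
      by (simp add: abs_mult sign_def abs_prod)
    also have "\<dots> \<le> (\<Prod>i = 0..<k. R)"
    proof (rule prod_mono)
      fix i assume i: "i \<in> {0..<k}"
      have "p i < k" using p i permutes_in_image by fastforce
      then show "0 \<le> \<bar>M $$ (i, p i)\<bar> \<and> \<bar>M $$ (i, p i)\<bar> \<le> R" using b i by auto
    qed
    finally show "\<bar>signof p * (\<Prod>i = 0..<k. M $$ (i, p i))\<bar> \<le> R ^ k" by simp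
  qed
  also have "\<dots> = real (card {p. p permutes {0..<k}}) * R ^ k" by simp
  finally show ?thesis .
qed

lemma auerbach:
  assumes nN: "is_norm_on_Rk k N" and k: "k \<ge> 1"
  shows "\<exists>M \<in> carrier_mat k k. (\<forall>j<k. colf k M j \<in> unit_ball_Rk k N) \<and>
     (\<forall>y \<in> unit_ball_Rk k N. \<exists>x. y = (\<lambda>i. \<Sum>j<k. x j * colf k M j i) \<and> (\<forall>j<k. \<bar>x j\<bar> \<le> 2))"
proof -
  let ?B = "unit_ball_Rk k N"
  obtain R where R: "R > 0" "\<And>y i. y \<in> Rk k \<Longrightarrow> \<bar>y i\<bar> \<le> R * N y"
    using coord_bound[OF nN] by blast
  have RB: "\<bar>y i\<bar> \<le> R" if "y \<in> ?B" for y i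
  proof -
    have "\<bar>y i\<bar> \<le> R * N y" using R that by (auto simp: unit_ball_Rk_def)
    also have "\<dots> \<le> R * 1" using that R by (intro mult_left_mono) (auto simp: unit_ball_Rk_def)
    finally show ?thesis by simp
  qed
  define good where "good M \<longleftrightarrow> M \<in> carrier_mat k k \<and> (\<forall>j<k. colf k M j \<in> ?B)" for M
  define D where "D = {\<bar>det M\<bar> | M. good M}"
  have bdd: "bdd_above D"
  proof (rule bdd_aboveI)
    fix d assume "d \<in> D"
    then obtain M where M: "good M" "d = \<bar>det M\<bar>" by (auto simp: D_def)
    have "\<bar>M $$ (i, j)\<bar> \<le> R" if "i < k" "j < k" for i j
      using RB[of "colf k M j" i] M(1) that by (auto simp: good_def colf_def)
    then show "d \<le> real (card {p. p permutes {0..<k}}) * R ^ k"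
      using det_abs_bound[of M k R] M by (auto simp: good_def)
  qed
  have Npos: "N (unitv i) > 0" if "i < k" for i
  proof -
    have "unitv i i \<noteq> 0" by (simp add: unitv_def)
    then have "unitv i \<noteq> (\<lambda>_. 0)" by force
    then show ?thesis using N_nonneg[OF nN Rk_unitv[OF that]] N_eq0[OF nN Rk_unitv[OF that]]
      by linarith
  qed
  define M0 where "M0 = mat k k (\<lambda>(i, j). if i = j then 1 / N (unitv i) else (0::real))"
  have M0c: "M0 \<in> carrier_mat k k" by (simp add: M0_def)
  have "colf k M0 j = (\<lambda>i. (1 / N (unitv j)) * unitv j i)" if "j < k" for j
    using that by (auto simp: colf_def M0_def unitv_def fun_eq_iff)
  then have "colf k M0 j \<in> ?B" if "j < k" for j
    using that N_scale[OF nN Rk_unitv[OF that], of "1 / N (unitv j)"] Npos[OF that]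
      Rk_scale[OF Rk_unitv[OF that], of "1 / N (unitv j)"]
    by (auto simp: unit_ball_Rk_def simp del: times_divide_eq_left times_divide_eq_right)
       (simp add: field_simps)
  then have gM0: "good M0" using M0c by (auto simp: good_def)
  have "upper_triangular M0" by (auto simp: upper_triangular_def M0_def)
  then have "det M0 = prod_list (diag_mat M0)" using det_upper_triangular M0c by blast
  also have "\<dots> = (\<Prod>i\<in>{0..<k}. 1 / N (unitv i))"
    by (simp add: diag_mat_def M0_def prod.distinct_set_conv_list[symmetric] cong: map_cong)
  finally have "det M0 > 0" using Npos by (auto intro!: prod_pos)
  then have "\<bar>det M0\<bar> > 0" by simp
  moreover have "\<bar>det M0\<bar> \<in> D" using gM0 unfolding D_def by blast
  ultimately
  have s0: "Sup D > 0" "D \<noteq> {}" using cSup_upper[OF _ bdd] by force+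
  then obtain d where "d \<in> D" "Sup D / 2 < d" using less_cSupD[of D "Sup D / 2"] by auto
  then obtain M where gM: "good M" and dM: "Sup D / 2 < \<bar>det M\<bar>" by (auto simp: D_def)
  have Mc: "M \<in> carrier_mat k k" using gM by (simp add: good_def)
  have detM: "det M \<noteq> 0" using dM s0 by auto
  show ?thesis
  proof (intro bexI[OF _ Mc] conjI allI impI ballI)
    fix j assume "j < k" then show "colf k M j \<in> ?B" using gM by (simp add: good_def)
  next
    fix y assume yB: "y \<in> ?B"
    then have yR: "y \<in> Rk k" by (simp add: unit_ball_Rk_def)
    define v where "v = vec k y"
    have vc: "v \<in> carrier_vec k" by (simp add: v_def)
    define x where "x = (1 / det M) \<cdot>\<^sub>v (adj_mat M *\<^sub>v v)"
    have adjc: "adj_mat M \<in> carrier_mat k k" using adj_mat[OF Mc] by simp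
    have xc: "x \<in> carrier_vec k" using adjc vc by (simp add: x_def)
    have Mx: "M *\<^sub>v x = v"
    proof -
      have "M *\<^sub>v x = (1 / det M) \<cdot>\<^sub>v (M *\<^sub>v (adj_mat M *\<^sub>v v))"
        unfolding x_def using Mc adjc vc by (simp add: mult_mat_vec)
      also have "M *\<^sub>v (adj_mat M *\<^sub>v v) = (M * adj_mat M) *\<^sub>v v"
        using Mc adjc vc by simp
      also have "\<dots> = (det M \<cdot>\<^sub>m 1\<^sub>m k) *\<^sub>v v" using adj_mat[OF Mc] by simp
      also have "\<dots> = det M \<cdot>\<^sub>v (1\<^sub>m k *\<^sub>v v)" using vc by auto
      also have "\<dots> = det M \<cdot>\<^sub>v v" using vc by simp
      also have "(1 / det M) \<cdot>\<^sub>v (det M \<cdot>\<^sub>v v) = ((1 / det M) * det M) \<cdot>\<^sub>v v"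
        by (simp add: smult_smult_assoc)
      finally show ?thesis using detM by simp
    qed
    have xb: "\<bar>x $ j\<bar> \<le> 2" if j: "j < k" for j
    proof -
      have cr: "det (replace_col M v j) = x $ j * det M"
        using cramer_lemma_mat[OF Mc xc j] Mx by simp
      have "good (replace_col M v j)"
      proof -
        have "colf k (replace_col M v j) j' = (if j' = j then y else colf k M j')" if "j' < k" for j'
          using Mc that yR by (auto simp: colf_def replace_col_def v_def fun_eq_iff Rk_def)
        then show ?thesis using gM yB Mc by (auto simp: good_def replace_col_def)
      qed
      then have "\<bar>x $ j * det M\<bar> \<in> D" unfolding D_def using cr
        by (intro CollectI exI[of _ "replace_col M v j"]) simp
      then have "\<bar>x $ j\<bar> * \<bar>det M\<bar> \<le> Sup D" using cSup_upper[OF _ bdd] by (simp add: abs_mult)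
      also have "\<dots> < 2 * \<bar>det M\<bar>" using dM by simp
      finally show ?thesis using detM by simp
    qed
    have rep: "y = (\<lambda>i. \<Sum>j<k. x $ j * colf k M j i)"
    proof
      fix i show "y i = (\<Sum>j<k. x $ j * colf k M j i)"
      proof (cases "i < k")
        case True
        have "y i = (M *\<^sub>v x) $ i" using Mx True by (simp add: v_def)
        also have "\<dots> = (\<Sum>j<k. M $$ (i, j) * x $ j)"
          using Mc xc True by (simp add: scalar_prod_def row_def lessThan_atLeast0)
        finally show ?thesis using True by (simp add: colf_def mult.commute)
      next
        case False
        then show ?thesis using yR by (simp add: colf_def Rk_def)
      qed
    qed
    show "\<exists>x. y = (\<lambda>i. \<Sum>j<k. x j * colf k M j i) \<and> (\<forall>j<k. \<bar>x j\<bar> \<le> 2)"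
      by (intro exI[of _ "\<lambda>j. x $ j"]) (use rep xb in auto)
  qed
qed

lemma norm_abs0: "is_norm_on_Rk 1 (\<lambda>y. \<bar>y 0\<bar>)"
  unfolding is_norm_on_Rk_def
proof (intro conjI ballI allI)
  fix y :: "nat \<Rightarrow> real" assume y: "y \<in> Rk 1"
  show "\<bar>y 0\<bar> \<ge> 0" by simp
  show "(\<bar>y 0\<bar> = 0) = (y = (\<lambda>_. 0))"
  proof
    assume "\<bar>y 0\<bar> = 0"
    show "y = (\<lambda>_. 0)"
    proof
      fix i show "y i = 0" using y \<open>\<bar>y 0\<bar> = 0\<close> by (cases i) (auto simp: Rk_def)
    qed
  qed simp
next
  fix a :: real and y :: "nat \<Rightarrow> real"
  show "\<bar>a * y 0\<bar> = \<bar>a\<bar> * \<bar>y 0\<bar>" by (simp add: abs_mult)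
next
  fix y z :: "nat \<Rightarrow> real"
  show "\<bar>y 0 + z 0\<bar> \<le> \<bar>y 0\<bar> + \<bar>z 0\<bar>" by (rule abs_triangle_ineq)
qed

lemma unit_ball_zero: "is_norm_on_Rk k N \<Longrightarrow> (\<lambda>_. 0) \<in> unit_ball_Rk k N"
  using N_zero[of k N] by (simp add: unit_ball_Rk_def Rk_zero)

lemma lip_set_ne:
  assumes "is_norm_on_Rk k N" "\<gamma> \<ge> 0"
  shows "{Sup (insert 0 ((\<lambda>f. Inf ((\<lambda>y. norm (f - \<Phi> y)) ` unit_ball_Rk k N)) ` K)) | \<Phi>.
        \<forall>y\<in>unit_ball_Rk k N. \<forall>y'\<in>unit_ball_Rk k N.
           norm (\<Phi> y - \<Phi> y') \<le> \<gamma> * N (\<lambda>i. y i - y' i)} \<noteq> {}"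
    (is "{?g \<Phi> | \<Phi>. ?P \<Phi>} \<noteq> {}")
proof -
  have "?P (\<lambda>_. 0)"
  proof (intro ballI)
    fix y y' assume "y \<in> unit_ball_Rk k N" "y' \<in> unit_ball_Rk k N"
    then have "N (\<lambda>i. y i - y' i) \<ge> 0"
      using N_nonneg[OF assms(1) Rk_diff] by (auto simp: unit_ball_Rk_def)
    then show "norm ((\<lambda>_. 0::'a) y - (\<lambda>_. 0) y') \<le> \<gamma> * N (\<lambda>i. y i - y' i)"
      using assms(2) by simp
  qed
  then have "?g (\<lambda>_. 0) \<in> {?g \<Phi> | \<Phi>. ?P \<Phi>}" by (intro CollectI exI[of _ "\<lambda>_. 0::'a"] conjI refl)
  then show ?thesis by (metis empty_iff)
qed

lemma inner_inf_le:
  assumes "is_norm_on_Rk k N" "y \<in> unit_ball_Rk k N"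
  shows "Inf ((\<lambda>y. norm (f - \<Phi> y)) ` unit_ball_Rk k N) \<le> norm (f - \<Phi> y)"
proof (rule cInf_lower)
  show "norm (f - \<Phi> y) \<in> (\<lambda>y. norm (f - \<Phi> y)) ` unit_ball_Rk k N" using assms(2) by blast
  show "bdd_below ((\<lambda>y. norm (f - \<Phi> y)) ` unit_ball_Rk k N)" by (rule bdd_belowI[of _ 0]) auto
qed

lemma inner_inf_nonneg:
  assumes "is_norm_on_Rk k N"
  shows "Inf ((\<lambda>y. norm (f - \<Phi> y)) ` unit_ball_Rk k N) \<ge> 0"
proof (rule cInf_greatest)
  show "(\<lambda>y. norm (f - \<Phi> y)) ` unit_ball_Rk k N \<noteq> {}" using unit_ball_zero[OF assms] by blast
qed auto

lemma outer_bdd: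
  assumes "is_norm_on_Rk k N" "bounded K"
  shows "bdd_above (insert 0 ((\<lambda>f. Inf ((\<lambda>y. norm (f - \<Phi> y)) ` unit_ball_Rk k N)) ` K))"
proof -
  obtain R where R: "\<And>f. f \<in> K \<Longrightarrow> norm f \<le> R" using assms(2) bounded_iff by blast
  have IR: "Inf ((\<lambda>y. norm (f - \<Phi> y)) ` unit_ball_Rk k N) \<le> R + norm (\<Phi> (\<lambda>_. 0))" if "f \<in> K" for f
  proof -
    have "Inf ((\<lambda>y. norm (f - \<Phi> y)) ` unit_ball_Rk k N) \<le> norm (f - \<Phi> (\<lambda>_. 0))"
      by (rule inner_inf_le[OF assms(1) unit_ball_zero[OF assms(1)]])
    also have "\<dots> \<le> norm f + norm (\<Phi> (\<lambda>_. 0))" by (rule norm_triangle_ineq4)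
    finally show ?thesis using R[OF that] by simp
  qed
  show ?thesis
  proof (intro bdd_aboveI[of _ "max 0 (R + norm (\<Phi> (\<lambda>_. 0)))"])
    fix x assume "x \<in> insert 0 ((\<lambda>f. Inf ((\<lambda>y. norm (f - \<Phi> y)) ` unit_ball_Rk k N)) ` K)"
    then consider "x = 0" | f where "f \<in> K" "x = Inf ((\<lambda>y. norm (f - \<Phi> y)) ` unit_ball_Rk k N)"
      by blast
    then show "x \<le> max 0 (R + norm (\<Phi> (\<lambda>_. 0)))"
    proof cases
      case 1 then show ?thesis by simp
    next
      case (2 f)
      then have "x \<le> R + norm (\<Phi> (\<lambda>_. 0))" using IR by blast
      then show ?thesis by simp
    qed
  qed
qed

lemma floor_eq_close:
  fixes a b s :: real
  assumes "s > 0" "\<lfloor>a / s\<rfloor> = \<lfloor>b / s\<rfloor>"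
  shows "\<bar>a - b\<bar> < s"
proof -
  have fa1: "real_of_int \<lfloor>a / s\<rfloor> \<le> a / s" by (rule of_int_floor_le)
  have fa2: "a / s < real_of_int \<lfloor>a / s\<rfloor> + 1" by (rule real_of_int_floor_add_one_gt)
  have fb1: "real_of_int \<lfloor>b / s\<rfloor> \<le> b / s" by (rule of_int_floor_le)
  have fb2: "b / s < real_of_int \<lfloor>b / s\<rfloor> + 1" by (rule real_of_int_floor_add_one_gt)
  have e: "real_of_int \<lfloor>a / s\<rfloor> = real_of_int \<lfloor>b / s\<rfloor>" using assms(2) by (rule arg_cong)
  have "\<bar>a / s - b / s\<bar> < 1" unfolding abs_less_iff using fa1 fa2 fb1 fb2 e by linarith
  moreover have "a - b = s * (a / s - b / s)" using assms(1) by (simp add: right_diff_distrib)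
  ultimately have "\<bar>a - b\<bar> = s * \<bar>a / s - b / s\<bar>" using assms(1) by (simp add: abs_mult)
  also have "\<dots> < s * 1" using assms(1) \<open>\<bar>a / s - b / s\<bar> < 1\<close> by (rule mult_strict_left_mono[rotated])
  finally show ?thesis by simp
qed

lemma entropy_le:
  assumes "eps > 0" "finite S" "card S \<le> 2 ^ m" "K \<subseteq> (\<Union>c\<in>S. cball c eps)"
  shows "entropy_number K m \<le> eps"
proof -
  let ?E = "{eps. eps > 0 \<and> (\<exists>S. finite S \<and> card S \<le> 2 ^ m \<and> K \<subseteq> (\<Union>c\<in>S. cball c eps))}"
  have "eps \<in> ?E" unfolding mem_Collect_eq using assms by blast
  moreover have "bdd_below ?E"
  proof (rule bdd_belowI[of _ 0])
    fix x assume "x \<in> ?E" then show "0 \<le> x" by simp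
  qed
  ultimately show ?thesis unfolding entropy_number_def by (rule cInf_lower)
qed

lemma lower_main:
  fixes K :: "'a::real_normed_vector set"
  assumes Kb: "bounded K" and g: "\<gamma> \<ge> 0" and n: "n \<ge> 1" and d: "\<delta> > 0"
    and lw: "lipschitz_width \<gamma> K n < \<delta>"
    and Mb: "(4 * real n * (\<gamma> + 1) / \<delta> + 1) ^ n \<le> 2 ^ M"
  shows "entropy_number K M \<le> 2 * \<delta>"
proof -
  define W where "W = {fixed_lipschitz_width \<gamma> K k N | k N. 1 \<le> k \<and> k \<le> n \<and> is_norm_on_Rk k N}"
  have "fixed_lipschitz_width \<gamma> K 1 (\<lambda>y. \<bar>y 0\<bar>) \<in> W"
    unfolding W_def mem_Collect_eq using n norm_abs0 by blast
  then have Wne: "W \<noteq> {}" by (metis empty_iff)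
  have "Inf W < \<delta>" using lw by (simp add: lipschitz_width_def W_def)
  from cInf_lessD[OF Wne this] obtain w where w: "w \<in> W" "w < \<delta>" by blast
  from w(1) have "\<exists>k N. w = fixed_lipschitz_width \<gamma> K k N \<and> 1 \<le> k \<and> k \<le> n \<and> is_norm_on_Rk k N"
    unfolding W_def by (simp only: mem_Collect_eq)
  then obtain k N where kN: "1 \<le> k" "k \<le> n" "is_norm_on_Rk k N"
    and wk: "w = fixed_lipschitz_width \<gamma> K k N" by blast
  have fl: "fixed_lipschitz_width \<gamma> K k N < \<delta>" using w(2) wk by simp
  note nN = kN(3)
  define B where "B = unit_ball_Rk k N"
  define FS where "FS = {Sup (insert 0 ((\<lambda>f. Inf ((\<lambda>y. norm (f - \<Phi> y)) ` unit_ball_Rk k N)) ` K)) | \<Phi>.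
        \<forall>y\<in>unit_ball_Rk k N. \<forall>y'\<in>unit_ball_Rk k N.
           norm (\<Phi> y - \<Phi> y') \<le> \<gamma> * N (\<lambda>i. y i - y' i)}"
  have "Inf FS < \<delta>" using fl by (simp add: fixed_lipschitz_width_def FS_def)
  from cInf_lessD[OF lip_set_ne[OF nN g, of K, folded FS_def] this] obtain v where v: "v \<in> FS" "v < \<delta>" by blast
  from v(1) have "\<exists>\<Phi>. v = Sup (insert 0 ((\<lambda>f. Inf ((\<lambda>y. norm (f - \<Phi> y)) ` B)) ` K)) \<and>
      (\<forall>y\<in>B. \<forall>y'\<in>B. norm (\<Phi> y - \<Phi> y') \<le> \<gamma> * N (\<lambda>i. y i - y' i))"
    unfolding FS_def B_def by (simp only: mem_Collect_eq)
  then obtain \<Phi> where lip: "\<forall>y\<in>B. \<forall>y'\<in>B. norm (\<Phi> y - \<Phi> y') \<le> \<gamma> * N (\<lambda>i. y i - y' i)"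
    and vP: "v = Sup (insert 0 ((\<lambda>f. Inf ((\<lambda>y. norm (f - \<Phi> y)) ` B)) ` K))" by blast
  have FP: "Sup (insert 0 ((\<lambda>f. Inf ((\<lambda>y. norm (f - \<Phi> y)) ` B)) ` K)) < \<delta>" using v(2) vP by simp
  have near: "\<exists>y\<in>B. norm (f - \<Phi> y) < \<delta>" if f: "f \<in> K" for f
  proof -
    have "Inf ((\<lambda>y. norm (f - \<Phi> y)) ` B) \<le> Sup (insert 0 ((\<lambda>f. Inf ((\<lambda>y. norm (f - \<Phi> y)) ` B)) ` K))"
      by (rule cSup_upper) (use f outer_bdd[OF nN Kb, of \<Phi>] in \<open>auto simp: B_def\<close>)
    then have "Inf ((\<lambda>y. norm (f - \<Phi> y)) ` B) < \<delta>" using FP by simp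
    then show ?thesis using cInf_lessD[of "(\<lambda>y. norm (f - \<Phi> y)) ` B" \<delta>] unit_ball_zero[OF nN]
      by (auto simp: B_def)
  qed
  obtain Mt where Mt: "Mt \<in> carrier_mat k k" "\<forall>j<k. colf k Mt j \<in> B"
    "\<forall>y \<in> B. \<exists>x. y = (\<lambda>i. \<Sum>j<k. x j * colf k Mt j i) \<and> (\<forall>j<k. \<bar>x j\<bar> \<le> 2)"
    using auerbach[OF nN kN(1)] unfolding B_def by blast
  define xy where "xy y = (SOME x. y = (\<lambda>i. \<Sum>j<k. x j * colf k Mt j i) \<and> (\<forall>j<k. \<bar>x j\<bar> \<le> 2))" for y
  have xy: "y = (\<lambda>i. \<Sum>j<k. xy y j * colf k Mt j i)" "\<And>j. j < k \<Longrightarrow> \<bar>xy y j\<bar> \<le> 2" if "y \<in> B" for y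
    using someI_ex[OF Mt(3)[rule_format, OF that]] unfolding xy_def by blast+
  define s where "s = \<delta> / (real k * (\<gamma> + 1))"
  have s: "s > 0" using d g kN(1) by (simp add: s_def)
  define Q where "Q = nat \<lfloor>4 / s\<rfloor>"
  define idx where "idx y = restrict (\<lambda>j. nat \<lfloor>(xy y j + 2) / s\<rfloor>) {..<k}" for y
  have idx_in: "idx y \<in> PiE {..<k} (\<lambda>_. {0..Q})" if "y \<in> B" for y
  proof -
    have "nat \<lfloor>(xy y j + 2) / s\<rfloor> \<le> Q" if "j < k" for j
    proof -
      have "(xy y j + 2) / s \<le> 4 / s" using xy(2)[OF \<open>y \<in> B\<close> that] s
        by (intro divide_right_mono) auto
      then show ?thesis unfolding Q_def by (intro nat_mono floor_mono)
    qed
    then show ?thesis by (auto simp: idx_def)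
  qed
  define rep where "rep g = (SOME y. y \<in> B \<and> idx y = g)" for g
  have rep: "rep (idx y) \<in> B \<and> idx (rep (idx y)) = idx y" if "y \<in> B" for y
    unfolding rep_def by (rule someI[of _ y]) (use that in auto)
  define S where "S = (\<lambda>g. \<Phi> (rep g)) ` (idx ` B)"
  have finI: "finite (PiE {..<k} (\<lambda>_. {0..Q}))" by (simp add: finite_PiE)
  have idxsub: "idx ` B \<subseteq> PiE {..<k} (\<lambda>_. {0..Q})" using idx_in by auto
  have finS: "finite S" unfolding S_def using finite_subset[OF idxsub finI] by simp
  have "card S \<le> card (idx ` B)" unfolding S_def by (rule card_image_le) (rule finite_subset[OF idxsub finI])
  also have "\<dots> \<le> card (PiE {..<k} (\<lambda>_. {0..Q}))" by (rule card_mono[OF finI idxsub])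
  also have "\<dots> = (Q + 1) ^ k" by (simp add: card_PiE)
  finally have cS: "card S \<le> (Q + 1) ^ k" .
  have "real ((Q + 1) ^ k) \<le> 2 ^ M"
  proof -
    define A where "A = 4 * real n * (\<gamma> + 1) / \<delta> + 1"
    have A1: "A \<ge> 1" using g d by (simp add: A_def)
    have "real Q \<le> 4 / s" unfolding Q_def using s by simp
    also have "4 / s = 4 * real k * (\<gamma> + 1) / \<delta>" using s d g by (simp add: s_def field_simps)
    also have "\<dots> \<le> 4 * real n * (\<gamma> + 1) / \<delta>" using kN(2) g d
      by (intro divide_right_mono mult_right_mono) auto
    finally have "real Q + 1 \<le> A" by (simp add: A_def)
    then have "real ((Q + 1) ^ k) \<le> A ^ k" by (simp add: power_mono)
    also have "\<dots> \<le> A ^ n" using A1 kN(2) by (simp add: power_increasing)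
    also have "\<dots> \<le> 2 ^ M" using Mb by (simp add: A_def)
    finally show ?thesis .
  qed
  then have "(Q + 1) ^ k \<le> (2::nat) ^ M"
    by (metis of_nat_le_iff of_nat_numeral of_nat_power)
  then have cS2: "card S \<le> 2 ^ M" using cS by linarith
  have cover: "K \<subseteq> (\<Union>c\<in>S. cball c (2 * \<delta>))"
  proof
    fix f assume f: "f \<in> K"
    obtain y where y: "y \<in> B" "norm (f - \<Phi> y) < \<delta>" using near[OF f] by blast
    define y' where "y' = rep (idx y)"
    have y': "y' \<in> B" "idx y' = idx y" using rep[OF y(1)] by (auto simp: y'_def)
    have close: "\<bar>xy y j - xy y' j\<bar> < s" if j: "j < k" for j
    proof -
      have "idx y' j = idx y j" using y'(2) by simp
      then have "nat \<lfloor>(xy y j + 2) / s\<rfloor> = nat \<lfloor>(xy y' j + 2) / s\<rfloor>"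
        using j by (simp add: idx_def)
      moreover have "\<lfloor>(xy y j + 2) / s\<rfloor> \<ge> 0" "\<lfloor>(xy y' j + 2) / s\<rfloor> \<ge> 0"
        using xy(2)[OF y(1) j] xy(2)[OF y'(1) j] s by auto
      ultimately have "\<lfloor>(xy y j + 2) / s\<rfloor> = \<lfloor>(xy y' j + 2) / s\<rfloor>" by (metis eq_nat_nat_iff)
      from floor_eq_close[OF s this] show ?thesis by simp
    qed
    have BR: "y \<in> Rk k" "y' \<in> Rk k" using y(1) y'(1) by (auto simp: B_def unit_ball_Rk_def)
    have colR: "\<And>j. colf k Mt j \<in> Rk k" by (rule colf_Rk)
    have diff: "(\<lambda>i. y i - y' i) = (\<lambda>i. \<Sum>j\<in>{..<k}. (xy y j - xy y' j) * colf k Mt j i)"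
    proof
      fix i
      have "y i = (\<Sum>j<k. xy y j * colf k Mt j i)" using xy(1)[OF y(1)] by metis
      moreover have "y' i = (\<Sum>j<k. xy y' j * colf k Mt j i)" using xy(1)[OF y'(1)] by metis
      ultimately show "y i - y' i = (\<Sum>j\<in>{..<k}. (xy y j - xy y' j) * colf k Mt j i)"
        by (simp add: sum_subtractf left_diff_distrib)
    qed
    have "N (\<lambda>i. y i - y' i) \<le> (\<Sum>j\<in>{..<k}. \<bar>xy y j - xy y' j\<bar> * N (colf k Mt j))"
      unfolding diff by (rule N_sum_le[OF nN]) (auto intro: colR)
    also have "\<dots> \<le> (\<Sum>j\<in>{..<k}. s)"
    proof (rule sum_mono)
      fix j assume j: "j \<in> {..<k}"
      have "N (colf k Mt j) \<le> 1" "N (colf k Mt j) \<ge> 0"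
        using Mt(2) j N_nonneg[OF nN colR] by (auto simp: B_def unit_ball_Rk_def)
      moreover have "\<bar>xy y j - xy y' j\<bar> \<le> s" using close[of j] j by simp
      ultimately have "\<bar>xy y j - xy y' j\<bar> * N (colf k Mt j) \<le> s * 1"
        by (intro mult_mono) auto
      then show "\<bar>xy y j - xy y' j\<bar> * N (colf k Mt j) \<le> s" by simp
    qed
    also have "\<dots> = \<delta> / (\<gamma> + 1)" using kN(1) g by (simp add: s_def)
    finally have Nd: "N (\<lambda>i. y i - y' i) \<le> \<delta> / (\<gamma> + 1)" .
    have "norm (\<Phi> y - \<Phi> y') \<le> \<gamma> * N (\<lambda>i. y i - y' i)" using lip y(1) y'(1) by blast
    also have "\<dots> \<le> \<gamma> * (\<delta> / (\<gamma> + 1))" using Nd g by (rule mult_left_mono)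
    also have "\<dots> \<le> \<delta>" using g d by (simp add: field_simps)
    finally have "norm (\<Phi> y - \<Phi> y') \<le> \<delta>" .
    moreover have "norm (f - \<Phi> y') \<le> norm (f - \<Phi> y) + norm (\<Phi> y - \<Phi> y')"
      using norm_triangle_ineq[of "f - \<Phi> y" "\<Phi> y - \<Phi> y'"] by simp
    ultimately have "norm (f - \<Phi> y') \<le> 2 * \<delta>" using y(2) by linarith
    then have "f \<in> cball (\<Phi> y') (2 * \<delta>)" by (simp add: dist_norm norm_minus_commute)
    moreover have "\<Phi> y' \<in> S" unfolding S_def y'_def using y(1) by blast
    ultimately show "f \<in> (\<Union>c\<in>S. cball c (2 * \<delta>))" by blast
  qed
  show ?thesis by (rule entropy_le[OF _ finS cS2 cover]) (use d in simp)
qed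

lemma lw_le_general:
  fixes K :: "'a::real_normed_vector set"
  assumes Kb: "bounded K" and g: "\<gamma> \<ge> 0" and k: "1 \<le> k" "k \<le> n" and nN: "is_norm_on_Rk k N"
    and lip: "\<forall>y\<in>unit_ball_Rk k N. \<forall>y'\<in>unit_ball_Rk k N. norm (\<Phi> y - \<Phi> y') \<le> \<gamma> * N (\<lambda>i. y i - y' i)"
    and cov: "\<And>f. f \<in> K \<Longrightarrow> \<exists>y\<in>unit_ball_Rk k N. norm (f - \<Phi> y) \<le> r"
    and r: "r \<ge> 0"
  shows "lipschitz_width \<gamma> K n \<le> r"
proof -
  define FS where "FS k N = {Sup (insert 0 ((\<lambda>f. Inf ((\<lambda>y. norm (f - \<Phi> y)) ` unit_ball_Rk k N)) ` K)) | \<Phi>.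
        \<forall>y\<in>unit_ball_Rk k N. \<forall>y'\<in>unit_ball_Rk k N.
           norm (\<Phi> y - \<Phi> y') \<le> \<gamma> * N (\<lambda>i. y i - y' i)}" for k N
  have FS_nonneg: "x \<ge> 0" if "x \<in> FS k N" "is_norm_on_Rk k N" for x k N
  proof -
    from that(1) obtain \<Psi> where x: "x = Sup (insert 0 ((\<lambda>f. Inf ((\<lambda>y. norm (f - \<Psi> y)) ` unit_ball_Rk k N)) ` K))"
      unfolding FS_def by blast
    show ?thesis unfolding x by (rule cSup_upper[OF insertI1 outer_bdd[OF that(2) Kb]])
  qed
  have fw_nonneg: "fixed_lipschitz_width \<gamma> K k N \<ge> 0" if "is_norm_on_Rk k N" for k N
    unfolding fixed_lipschitz_width_def
    using lip_set_ne[OF that g, of K] FS_nonneg[OF _ that] unfolding FS_def[symmetric]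
    by (intro cInf_greatest) auto
  define G where "G = Sup (insert 0 ((\<lambda>f. Inf ((\<lambda>y. norm (f - \<Phi> y)) ` unit_ball_Rk k N)) ` K))"
  have "G \<le> r" unfolding G_def
  proof (rule cSup_least)
    fix x assume "x \<in> insert 0 ((\<lambda>f. Inf ((\<lambda>y. norm (f - \<Phi> y)) ` unit_ball_Rk k N)) ` K)"
    then consider "x = 0" | f where "f \<in> K" "x = Inf ((\<lambda>y. norm (f - \<Phi> y)) ` unit_ball_Rk k N)" by blast
    then show "x \<le> r"
    proof cases
      case 1 then show ?thesis using r by simp
    next
      case (2 f)
      obtain y where y: "y \<in> unit_ball_Rk k N" "norm (f - \<Phi> y) \<le> r" using cov[OF 2(1)] by blast
      have "x \<le> norm (f - \<Phi> y)" unfolding 2(2) by (rule inner_inf_le[OF nN y(1)])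
      then show ?thesis using y(2) by linarith
    qed
  qed simp
  have "fixed_lipschitz_width \<gamma> K k N \<le> G"
    unfolding fixed_lipschitz_width_def
  proof (rule cInf_lower)
    show "G \<in> {Sup (insert 0 ((\<lambda>f. Inf ((\<lambda>y. norm (f - \<Phi> y)) ` unit_ball_Rk k N)) ` K)) | \<Phi>.
        \<forall>y\<in>unit_ball_Rk k N. \<forall>y'\<in>unit_ball_Rk k N.
           norm (\<Phi> y - \<Phi> y') \<le> \<gamma> * N (\<lambda>i. y i - y' i)}"
      unfolding G_def using lip by blast
    have "bdd_below (FS k N)" using FS_nonneg[OF _ nN] by (intro bdd_belowI[of _ 0]) auto
    then show "bdd_below {Sup (insert 0 ((\<lambda>f. Inf ((\<lambda>y. norm (f - \<Phi> y)) ` unit_ball_Rk k N)) ` K)) | \<Phi>.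
        \<forall>y\<in>unit_ball_Rk k N. \<forall>y'\<in>unit_ball_Rk k N.
           norm (\<Phi> y - \<Phi> y') \<le> \<gamma> * N (\<lambda>i. y i - y' i)}" unfolding FS_def .
  qed
  moreover have "lipschitz_width \<gamma> K n \<le> fixed_lipschitz_width \<gamma> K k N"
    unfolding lipschitz_width_def
  proof (rule cInf_lower)
    show "fixed_lipschitz_width \<gamma> K k N \<in> {fixed_lipschitz_width \<gamma> K k N | k N. 1 \<le> k \<and> k \<le> n \<and> is_norm_on_Rk k N}"
      using k nN by blast
    show "bdd_below {fixed_lipschitz_width \<gamma> K k N | k N. 1 \<le> k \<and> k \<le> n \<and> is_norm_on_Rk k N}"
    proof (rule bdd_belowI[of _ 0])
      fix x assume "x \<in> {fixed_lipschitz_width \<gamma> K k N | k N. 1 \<le> k \<and> k \<le> n \<and> is_norm_on_Rk k N}"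
      then obtain k' N' where "x = fixed_lipschitz_width \<gamma> K k' N'" "is_norm_on_Rk k' N'" by blast
      then show "0 \<le> x" using fw_nonneg by simp
    qed
  qed
  ultimately show ?thesis using \<open>G \<le> r\<close> by linarith
qed

definition Ninf :: "nat \<Rightarrow> (nat \<Rightarrow> real) \<Rightarrow> real" where
  "Ninf n y = Max ((\<lambda>i. \<bar>y i\<bar>) ` {..<n})"

definition mn :: "nat \<Rightarrow> (nat \<Rightarrow> real) \<Rightarrow> real" where
  "mn n y = Min ((\<lambda>i. \<bar>y i\<bar>) ` {..<n})"

context fixes n :: nat assumes n1: "n \<ge> 1"
begin

lemma fin_ne: "finite ((\<lambda>i. \<bar>y i\<bar>) ` {..<n})" "(\<lambda>i. \<bar>y i\<bar>) ` {..<n} \<noteq> {}"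
proof -
  have "0 \<in> {..<n}" using n1 by simp
  then show "(\<lambda>i. \<bar>y i\<bar>) ` {..<n} \<noteq> {}" by blast
qed simp

lemma Ninf_ge: "i < n \<Longrightarrow> \<bar>y i\<bar> \<le> Ninf n y"
  unfolding Ninf_def using fin_ne by (intro Max_ge) auto

lemma Ninf_le_iff: "Ninf n y \<le> c \<longleftrightarrow> (\<forall>i<n. \<bar>y i\<bar> \<le> c)"
  unfolding Ninf_def using fin_ne[of y] by (auto simp: Max_le_iff)

lemma Ninf_in: "\<exists>i<n. Ninf n y = \<bar>y i\<bar>"
  using Max_in[OF fin_ne[of y]] unfolding Ninf_def by auto

lemma mn_le: "i < n \<Longrightarrow> mn n y \<le> \<bar>y i\<bar>"
  unfolding mn_def using fin_ne by (intro Min_le) auto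

lemma mn_in: "\<exists>i<n. mn n y = \<bar>y i\<bar>"
  using Min_in[OF fin_ne[of y]] unfolding mn_def by auto

lemma mn_nonneg: "mn n y \<ge> 0"
  using mn_in[of y] by auto

lemma mn_lip: "\<bar>mn n y - mn n y'\<bar> \<le> Ninf n (\<lambda>i. y i - y' i)"
proof -
  have a: "mn n y \<le> mn n y' + Ninf n (\<lambda>i. y i - y' i)" for y y'
  proof -
    obtain i where i: "i < n" "mn n y' = \<bar>y' i\<bar>" using mn_in by blast
    have "mn n y \<le> \<bar>y i\<bar>" by (rule mn_le[OF i(1)])
    also have "\<dots> \<le> \<bar>y' i\<bar> + \<bar>y i - y' i\<bar>" by linarith
    also have "\<bar>y i - y' i\<bar> \<le> Ninf n (\<lambda>i. y i - y' i)" using Ninf_ge[OF i(1), of "\<lambda>i. y i - y' i"] by simp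
    finally show ?thesis using i(2) by linarith
  qed
  have "Ninf n (\<lambda>i. y' i - y i) = Ninf n (\<lambda>i. y i - y' i)"
    unfolding Ninf_def by (simp add: abs_minus_commute)
  then show ?thesis using a[of y y'] a[of y' y] by linarith
qed

lemma Ninf_norm: "is_norm_on_Rk n (Ninf n)"
  unfolding is_norm_on_Rk_def
proof (intro conjI ballI allI)
  fix y :: "nat \<Rightarrow> real" assume y: "y \<in> Rk n"
  show "Ninf n y \<ge> 0" using Ninf_ge[of 0 y] n1 by linarith
  show "(Ninf n y = 0) = (y = (\<lambda>_. 0))"
  proof
    assume "Ninf n y = 0"
    then have "\<forall>i<n. \<bar>y i\<bar> \<le> 0" using Ninf_le_iff[of y 0] by simp
    then show "y = (\<lambda>_. 0)" using y by (auto simp: Rk_def fun_eq_iff) (meson not_le)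
  next
    assume "y = (\<lambda>_. 0)"
    then have "Ninf n y \<le> 0" using Ninf_le_iff by simp
    moreover have "Ninf n y \<ge> 0" using Ninf_ge[of 0 y] n1 by linarith
    ultimately show "Ninf n y = 0" by linarith
  qed
next
  fix a :: real and y :: "nat \<Rightarrow> real" assume y: "y \<in> Rk n"
  have le: "Ninf n (\<lambda>i. a * y i) \<le> \<bar>a\<bar> * Ninf n y"
    unfolding Ninf_le_iff using Ninf_ge by (auto simp: abs_mult intro: mult_left_mono)
  obtain i where i: "i < n" "Ninf n y = \<bar>y i\<bar>" using Ninf_in by blast
  have "\<bar>a\<bar> * Ninf n y = \<bar>a * y i\<bar>" using i by (simp add: abs_mult)
  also have "\<dots> \<le> Ninf n (\<lambda>i. a * y i)" using Ninf_ge[OF i(1), of "\<lambda>i. a * y i"] by simp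
  finally show "Ninf n (\<lambda>i. a * y i) = \<bar>a\<bar> * Ninf n y" using le by linarith
next
  fix y z :: "nat \<Rightarrow> real"
  show "Ninf n (\<lambda>i. y i + z i) \<le> Ninf n y + Ninf n z"
    unfolding Ninf_le_iff
  proof (intro allI impI)
    fix i assume "i < n"
    then have "\<bar>y i\<bar> \<le> Ninf n y" "\<bar>z i\<bar> \<le> Ninf n z" by (auto intro: Ninf_ge)
    then show "\<bar>y i + z i\<bar> \<le> Ninf n y + Ninf n z" by linarith
  qed
qed

end

lemma rad_bdd:
  fixes K :: "'a::real_normed_vector set"
  assumes "bounded K"
  shows "bdd_above (insert 0 ((\<lambda>f. norm (f - g)) ` K))"
proof -
  obtain R where R: "\<And>f. f \<in> K \<Longrightarrow> norm f \<le> R" using assms bounded_iff by blast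
  show ?thesis
  proof (rule bdd_aboveI[of _ "max 0 (R + norm g)"])
    fix x assume "x \<in> insert 0 ((\<lambda>f. norm (f - g)) ` K)"
    then consider "x = 0" | f where "f \<in> K" "x = norm (f - g)" by blast
    then show "x \<le> max 0 (R + norm g)"
    proof cases
      case 1 then show ?thesis by simp
    next
      case (2 f)
      have "norm (f - g) \<le> norm f + norm g" by (rule norm_triangle_ineq4)
      then show ?thesis using 2 R[OF 2(1)] by simp
    qed
  qed
qed

lemma rad_nonneg:
  fixes K :: "'a::real_normed_vector set"
  assumes "bounded K"
  shows "rad K \<ge> 0"
  unfolding rad_def
proof (rule cInf_greatest)
  fix x assume "x \<in> (\<lambda>g. Sup (insert 0 ((\<lambda>f. norm (f - g)) ` K))) ` UNIV"
  then obtain g where "x = Sup (insert 0 ((\<lambda>f. norm (f - g)) ` K))" by blast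
  then show "0 \<le> x" using cSup_upper[OF insertI1 rad_bdd[OF assms]] by simp
qed simp

lemma rad_center:
  fixes K :: "'a::real_normed_vector set"
  assumes "bounded K" "\<eta> > 0"
  shows "\<exists>g. \<forall>f\<in>K. norm (f - g) \<le> rad K + \<eta>"
proof -
  have "Inf ((\<lambda>g. Sup (insert 0 ((\<lambda>f. norm (f - g)) ` K))) ` UNIV) < rad K + \<eta>"
    using assms(2) unfolding rad_def by simp
  from cInf_lessD[OF _ this] obtain x where "x \<in> (\<lambda>g. Sup (insert 0 ((\<lambda>f. norm (f - g)) ` K))) ` UNIV"
    "x < rad K + \<eta>" by blast
  then obtain g where g: "Sup (insert 0 ((\<lambda>f. norm (f - g)) ` K)) < rad K + \<eta>" by blast
  have "norm (f - g) \<le> rad K + \<eta>" if "f \<in> K" for f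
  proof -
    have "norm (f - g) \<in> insert 0 ((\<lambda>f. norm (f - g)) ` K)" using that by blast
    from cSup_upper[OF this rad_bdd[OF assms(1)]] show ?thesis using g by linarith
  qed
  then show ?thesis by blast
qed

lemma upper_step:
  fixes K :: "'a::real_normed_vector set"
  assumes Kb: "bounded K" and n1: "n \<ge> 1" and g2: "\<gamma> \<ge> 2 * rad K"
    and e: "eps > 0" and Sf: "finite S" and Sc: "card S \<le> 2 ^ n" and Sk: "K \<subseteq> (\<Union>c\<in>S. cball c eps)"
    and eta: "\<eta> > 0"
  shows "lipschitz_width \<gamma> K n \<le> eps + \<eta>"
proof -
  have r0: "rad K \<ge> 0" by (rule rad_nonneg[OF Kb])
  then have g0: "\<gamma> \<ge> 0" using g2 by linarith
  obtain g where gK: "\<And>f. f \<in> K \<Longrightarrow> norm (f - g) \<le> rad K + \<eta>" using rad_center[OF Kb eta] by blast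
  define r where "r = rad K + \<eta>"
  have rpos: "r > 0" using r0 eta by (simp add: r_def)
  note nI = Ninf_norm[OF n1]
  have zB: "(\<lambda>_. 0) \<in> unit_ball_Rk n (Ninf n)" by (rule unit_ball_zero[OF nI])
  show ?thesis
  proof (cases "eps \<ge> r")
    case True
    show ?thesis
    proof (rule lw_le_general[OF Kb g0 n1 order.refl nI, where \<Phi> = "\<lambda>_. g"])
      show "\<forall>y\<in>unit_ball_Rk n (Ninf n). \<forall>y'\<in>unit_ball_Rk n (Ninf n).
          norm (g - g) \<le> \<gamma> * Ninf n (\<lambda>i. y i - y' i)"
        using g0 N_nonneg[OF nI Rk_diff] by (auto simp: unit_ball_Rk_def)
      fix f assume "f \<in> K"
      then have "norm (f - g) \<le> eps + \<eta>" using gK True eta unfolding r_def by force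
      then show "\<exists>y\<in>unit_ball_Rk n (Ninf n). norm (f - g) \<le> eps + \<eta>" using zB by blast
    qed (use e eta in simp)
  next
    case False
    then have er: "eps < r" by simp
    define S' where "S' = {c \<in> S. \<exists>f\<in>K. norm (f - c) \<le> eps}"
    have S'f: "finite S'" using Sf by (simp add: S'_def)
    have S'c: "card S' \<le> 2 ^ n" using card_mono[OF Sf, of S'] Sc by (auto simp: S'_def)
    define P where "P = PiE {..<n} (\<lambda>_. {-1::real, 1})"
    define ext where "ext v = (\<lambda>i. if i < n then v i else 0)" for v :: "nat \<Rightarrow> real"
    define V where "V = ext ` P"
    have injP: "inj_on ext P"
    proof (rule inj_onI)
      fix v w assume vw: "v \<in> P" "w \<in> P" "ext v = ext w"
      show "v = w"
      proof (rule PiE_ext[OF vw(1)[unfolded P_def] vw(2)[unfolded P_def]])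
        fix i assume "i \<in> {..<n}"
        then show "v i = w i" using fun_cong[OF vw(3), of i] by (simp add: ext_def)
      qed
    qed
    have "card V = card P" unfolding V_def by (rule card_image[OF injP])
    also have "card P = 2 ^ n" by (simp add: P_def card_PiE numeral_2_eq_2)
    finally have "card V = 2 ^ n" .
    then have "card S' \<le> card V" using S'c by simp
    moreover have Vf: "finite V" unfolding V_def P_def by (simp add: finite_PiE)
    ultimately obtain h where h: "h ` S' \<subseteq> V" "inj_on h S'" using card_le_inj[OF S'f] by blast
    define t where "t = min 1 (\<gamma> / (2 * r))"
    have t01: "0 \<le> t" "t \<le> 1" using g0 rpos by (auto simp: t_def)
    define q where "q v = (if v \<in> h ` S' then t *\<^sub>R (the_inv_into S' h v - g) else 0)" for v
    have qb: "norm (q v) \<le> \<gamma>" for v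
    proof (cases "v \<in> h ` S'")
      case True
      then obtain c where c: "c \<in> S'" "v = h c" by blast
      have qv: "q v = t *\<^sub>R (c - g)" using True c h(2) by (simp add: q_def the_inv_into_f_f)
      obtain f where f: "f \<in> K" "norm (f - c) \<le> eps" using c(1) by (auto simp: S'_def)
      have "norm (c - g) \<le> norm (f - c) + norm (f - g)"
        using norm_triangle_ineq4[of "f - g" "f - c"] by (simp add: norm_minus_commute)
      also have "\<dots> \<le> eps + r" using f(2) gK[OF f(1)] unfolding r_def by (rule add_mono)
      also have "\<dots> \<le> 2 * r" using er by simp
      finally have cg: "norm (c - g) \<le> 2 * r" .
      have "norm (q v) = t * norm (c - g)" using qv t01 by simp
      also have "\<dots> \<le> t * (2 * r)" using cg t01 by (intro mult_left_mono) auto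
      also have "\<dots> \<le> \<gamma> / (2 * r) * (2 * r)" using rpos by (intro mult_right_mono) (auto simp: t_def)
      also have "\<dots> = \<gamma>" using rpos by simp
      finally show ?thesis .
    next
      case False then show ?thesis using g0 by (simp add: q_def)
    qed
    define \<sigma> where "\<sigma> y = (\<lambda>i. if i < n then (if y i < 0 then -1 else 1) else (0::real))" for y :: "nat \<Rightarrow> real"
    define \<Phi> where "\<Phi> y = g + mn n y *\<^sub>R q (\<sigma> y)" for y
    have lip: "norm (\<Phi> y - \<Phi> y') \<le> \<gamma> * Ninf n (\<lambda>i. y i - y' i)" for y y'
    proof (cases "\<sigma> y = \<sigma> y'")
      case True
      have "\<Phi> y - \<Phi> y' = (mn n y - mn n y') *\<^sub>R q (\<sigma> y)"
        unfolding \<Phi>_def True by (simp add: scaleR_diff_left)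
      then have "norm (\<Phi> y - \<Phi> y') = \<bar>mn n y - mn n y'\<bar> * norm (q (\<sigma> y))" by simp
      also have "\<dots> \<le> Ninf n (\<lambda>i. y i - y' i) * \<gamma>"
        using mn_lip[OF n1, of y y'] qb[of "\<sigma> y"] by (intro mult_mono) auto
      finally show ?thesis by (simp add: mult.commute)
    next
      case False
      then obtain i where i: "i < n" "\<sigma> y i \<noteq> \<sigma> y' i"
        by (auto simp: \<sigma>_def fun_eq_iff split: if_splits)
      then have "(y i < 0) \<noteq> (y' i < 0)" by (auto simp: \<sigma>_def split: if_splits)
      then have yi: "\<bar>y i - y' i\<bar> = \<bar>y i\<bar> + \<bar>y' i\<bar>" by auto
      have m1: "mn n y \<le> \<bar>y i\<bar>" "mn n y' \<le> \<bar>y' i\<bar>" using mn_le[OF n1 i(1)] by auto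
      have m0: "mn n y \<ge> 0" "mn n y' \<ge> 0" using mn_nonneg[OF n1] by auto
      have "\<Phi> y - \<Phi> y' = mn n y *\<^sub>R q (\<sigma> y) - mn n y' *\<^sub>R q (\<sigma> y')" by (simp add: \<Phi>_def)
      then have "norm (\<Phi> y - \<Phi> y') \<le> norm (mn n y *\<^sub>R q (\<sigma> y)) + norm (mn n y' *\<^sub>R q (\<sigma> y'))"
        using norm_triangle_ineq4 by metis
      also have "\<dots> = mn n y * norm (q (\<sigma> y)) + mn n y' * norm (q (\<sigma> y'))" using m0 by simp
      also have "\<dots> \<le> mn n y * \<gamma> + mn n y' * \<gamma>"
        using m0 qb by (intro add_mono mult_left_mono) auto
      also have "\<dots> \<le> \<gamma> * \<bar>y i - y' i\<bar>" using m1 g0 yi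
        by (simp add: distrib_left mult.commute mult_left_mono add_mono)
      also have "\<dots> \<le> \<gamma> * Ninf n (\<lambda>i. y i - y' i)"
        using Ninf_ge[OF n1 i(1), of "\<lambda>i. y i - y' i"] g0 by (intro mult_left_mono) auto
      finally show ?thesis .
    qed
    show ?thesis
    proof (rule lw_le_general[OF Kb g0 n1 order.refl nI, where \<Phi> = \<Phi>])
      show "\<forall>y\<in>unit_ball_Rk n (Ninf n). \<forall>y'\<in>unit_ball_Rk n (Ninf n).
          norm (\<Phi> y - \<Phi> y') \<le> \<gamma> * Ninf n (\<lambda>i. y i - y' i)" using lip by blast
      fix f assume fK: "f \<in> K"
      then obtain c where c: "c \<in> S" "f \<in> cball c eps" using Sk by blast
      have fc: "norm (f - c) \<le> eps" using c(2) by (simp add: dist_norm norm_minus_commute)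
      then have cS': "c \<in> S'" using c(1) fK by (auto simp: S'_def)
      then have "h c \<in> V" using h(1) by blast
      then obtain p where p: "p \<in> P" "h c = ext p" by (auto simp: V_def)
      define v where "v = h c"
      have vi: "v i = -1 \<or> v i = 1" if "i < n" for i
        using p that by (auto simp: v_def ext_def P_def PiE_def Pi_def)
      have vo: "v i = 0" if "\<not> i < n" for i using p that by (simp add: v_def ext_def)
      have vR: "v \<in> Rk n" using vo by (auto simp: Rk_def)
      have "Ninf n v \<le> 1" unfolding Ninf_le_iff[OF n1]
      proof (intro allI impI)
        fix i assume "i < n"
        then have "v i = -1 \<or> v i = 1" by (rule vi)
        then show "\<bar>v i\<bar> \<le> 1" by (elim disjE) simp_all
      qed
      then have vB: "v \<in> unit_ball_Rk n (Ninf n)" using vR by (simp add: unit_ball_Rk_def)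
      have va: "\<bar>v i\<bar> = 1" if "i < n" for i
      proof -
        have "v i = -1 \<or> v i = 1" using that by (rule vi)
        then show ?thesis by (elim disjE) simp_all
      qed
      have "(\<lambda>i. \<bar>v i\<bar>) ` {..<n} = {1}"
      proof
        show "(\<lambda>i. \<bar>v i\<bar>) ` {..<n} \<subseteq> {1}" using va by auto
        have "0 \<in> {..<n}" using n1 by simp
        then have "\<bar>v 0\<bar> \<in> (\<lambda>i. \<bar>v i\<bar>) ` {..<n}" by blast
        then show "{1} \<subseteq> (\<lambda>i. \<bar>v i\<bar>) ` {..<n}" using va[of 0] n1 by simp
      qed
      then have mv: "mn n v = 1" by (simp add: mn_def)
      have sv: "\<sigma> v = v"
      proof
        fix i show "\<sigma> v i = v i"
        proof (cases "i < n")
          case True then have "v i = -1 \<or> v i = 1" by (rule vi)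
          then show ?thesis using True by (elim disjE) (simp_all add: \<sigma>_def)
        next
          case False then show ?thesis using vo[OF False] by (simp add: \<sigma>_def)
        qed
      qed
      have qv: "q v = t *\<^sub>R (c - g)" using cS' h(2) by (simp add: q_def v_def the_inv_into_f_f)
      have Pv: "\<Phi> v = g + t *\<^sub>R (c - g)" by (simp add: \<Phi>_def mv sv qv)
      have "f - \<Phi> v = (1 - t) *\<^sub>R (f - g) + t *\<^sub>R (f - c)"
        by (simp add: Pv algebra_simps)
      then have "norm (f - \<Phi> v) \<le> (1 - t) * norm (f - g) + t * norm (f - c)"
        using norm_triangle_ineq[of "(1 - t) *\<^sub>R (f - g)" "t *\<^sub>R (f - c)"] t01 by simp
      also have "\<dots> \<le> (1 - t) * r + t * eps"
        using gK[OF fK] fc t01 unfolding r_def by (intro add_mono mult_left_mono) auto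
      also have "\<dots> \<le> eps + \<eta>"
      proof (cases "\<gamma> / (2 * r) \<ge> 1")
        case True then have "t = 1" by (simp add: t_def)
        then show ?thesis using eta by simp
      next
        case False then have tt: "t = \<gamma> / (2 * r)" by (simp add: t_def)
        have "(1 - t) * r = r - \<gamma> / 2" unfolding tt using rpos by (simp add: field_simps)
        also have "\<dots> \<le> \<eta>" using g2 unfolding r_def by linarith
        finally have "(1 - t) * r \<le> \<eta>" .
        moreover have "t * eps \<le> eps" using t01 e by (simp add: mult_left_le_one_le)
        ultimately show ?thesis by linarith
      qed
      finally show "\<exists>y\<in>unit_ball_Rk n (Ninf n). norm (f - \<Phi> y) \<le> eps + \<eta>" using vB by blast
    qed (use e eta in simp)
  qed
qed

lemma upper_main:
  fixes K :: "'a::real_normed_vector set"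
  assumes Kb: "bounded K" and n1: "n \<ge> 1" and g2: "\<gamma> \<ge> 2 * rad K"
  shows "lipschitz_width \<gamma> K n \<le> entropy_number K n"
  unfolding entropy_number_def
proof (rule cInf_greatest)
  obtain R where R: "\<And>f. f \<in> K \<Longrightarrow> norm f \<le> R" using Kb bounded_iff by blast
  define R' where "R' = max 1 R"
  have "norm f \<le> R'" if "f \<in> K" for f using R[OF that] by (simp add: R'_def)
  then have "K \<subseteq> (\<Union>c\<in>{0}. cball c R')" by (auto simp: dist_norm)
  moreover have "card {0::'a} \<le> 2 ^ n" by simp
  moreover have "R' > 0" by (simp add: R'_def)
  ultimately show "{eps. eps > 0 \<and> (\<exists>S. finite S \<and> card S \<le> 2 ^ n \<and> K \<subseteq> (\<Union>c\<in>S. cball c eps))} \<noteq> {}"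
    by blast
next
  fix eps assume "eps \<in> {eps. eps > 0 \<and> (\<exists>S. finite S \<and> card S \<le> 2 ^ n \<and> K \<subseteq> (\<Union>c\<in>S. cball c eps))}"
  then obtain S where e: "eps > 0" "finite S" "card S \<le> 2 ^ n" "K \<subseteq> (\<Union>c\<in>S. cball c eps)" by blast
  show "lipschitz_width \<gamma> K n \<le> eps"
    by (rule field_le_epsilon) (rule upper_step[OF Kb n1 g2 e])
qed

lemma LB3:
  fixes K :: "'a::real_normed_vector set"
  assumes Kb: "bounded K" and g: "\<gamma> \<ge> 0" and n1: "n \<ge> 1" and T: "T > 0"
    and H: "\<And>M::nat. real n \<le> real M \<Longrightarrow>
        real M \<le> real n * (log 2 (4 * real n * (\<gamma> + 1) / T + 1) + 2) \<Longrightarrow> entropy_number K M > 2 * T"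
  shows "lipschitz_width \<gamma> K n \<ge> T"
proof (rule ccontr)
  assume "\<not> lipschitz_width \<gamma> K n \<ge> T"
  then have lw: "lipschitz_width \<gamma> K n < T" by simp
  define A where "A = 4 * real n * (\<gamma> + 1) / T + 1"
  have A1: "A \<ge> 1" using g T by (simp add: A_def)
  then have lA: "log 2 A \<ge> 0" by simp
  define M where "M = nat \<lceil>real n * (log 2 A + 1)\<rceil>"
  have M1: "real M \<ge> real n * (log 2 A + 1)" unfolding M_def by linarith
  have M2: "real M \<le> real n * (log 2 A + 1) + 1" unfolding M_def
    using lA by (simp add: of_nat_nat)
  have "real n \<le> real n * (log 2 A + 1)" using lA mult_left_mono[of 1 "log 2 A + 1" "real n"] by simp
  then have Mn: "real n \<le> real M" using M1 by linarith
  have "real M \<le> real n * (log 2 A + 2)" using M2 n1 by (simp add: algebra_simps)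
  then have big: "entropy_number K M > 2 * T" using H[OF Mn] by (simp add: A_def)
  have "A ^ n = (2 powr (log 2 A)) ^ n" using A1 by simp
  also have "\<dots> = (2 powr (log 2 A)) powr (real n)" by (rule powr_realpow[symmetric]) simp
  also have "\<dots> = 2 powr (log 2 A * real n)" by (rule powr_powr)
  also have "\<dots> \<le> 2 powr (real M)" using M1 lA by (intro powr_mono) (auto simp: algebra_simps)
  also have "\<dots> = 2 ^ M" by (rule powr_realpow) simp
  finally have "(4 * real n * (\<gamma> + 1) / T + 1) ^ n \<le> 2 ^ M" by (simp add: A_def)
  from lower_main[OF Kb g n1 T lw this] big show False by linarith
qed

lemma H2:
  assumes p: "p \<ge> 0" and q: "q \<ge> 0" and a: "a \<ge> 0" and b: "b > 0" and c: "c > 0" and e: "e \<ge> 0"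
  shows "\<exists>x. 0 < x \<and> x \<le> 1 \<and>
     2 * x * (a + 2 + log 2 (b / x + 1)) powr p * (e + log 2 (a + 2 + log 2 (b / x + 1))) powr q < c"
proof -
  define a' where "a' = a + 2 + log 2 (b + 1)"
  have a'2: "a' \<ge> 2" using a b by (simp add: a'_def)
  define r where "r = p + q"
  define \<kappa> where "\<kappa> = e / 2 + 1 + 1 / ln (2::real)"
  have l2: "ln (2::real) > 0" by simp
  have k0: "\<kappa> > 0" using l2 e by (simp add: \<kappa>_def add_pos_pos add_nonneg_pos)
  have "((\<lambda>u::real. 2 powr (-u) * (a' + u) powr r) \<longlongrightarrow> 0) at_top" by real_asymp
  then have "eventually (\<lambda>u. 2 powr (-u) * (a' + u) powr r < c / (2 * \<kappa> powr q)) at_top"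
    using c k0 by (intro order_tendstoD) auto
  then obtain u0 where u0: "\<And>u. u \<ge> u0 \<Longrightarrow> 2 powr (-u) * (a' + u) powr r < c / (2 * \<kappa> powr q)"
    by (auto simp: eventually_at_top_linorder)
  define u where "u = max 0 u0"
  define x where "x = 2 powr (-u)"
  have u0': "u \<ge> 0" by (simp add: u_def)
  have xpos: "x > 0" by (simp add: x_def)
  have x1: "x \<le> 1" unfolding x_def using powr_mono[of "-u" 0 2] u0' by simp
  have lx: "log 2 (1 / x) = u" unfolding x_def by (simp add: log_powr powr_minus_divide)
  define D where "D = a + 2 + log 2 (b / x + 1)"
  have "b / x + 1 \<le> (b + 1) / x" using xpos x1 b by (simp add: field_simps)
  moreover have "0 < b / x + 1" using xpos b by (simp add: add_pos_pos)
  ultimately have "log 2 (b / x + 1) \<le> log 2 ((b + 1) / x)" using xpos b by (intro log_le_cancel_iff[THEN iffD2]) auto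
  also have "\<dots> = log 2 (b + 1) + log 2 (1 / x)" using xpos b by (simp add: log_divide log_mult divide_inverse)
  finally have Dle: "D \<le> a' + u" unfolding D_def a'_def lx by simp
  have "1 \<le> b / x + 1" using xpos b by simp
  then have lb: "log 2 (b / x + 1) \<ge> 0" using zero_le_log_cancel_iff[of 2 "b / x + 1"] by simp
  have D2: "D \<ge> 2" unfolding D_def using a lb by simp
  have lD: "e + log 2 D \<le> \<kappa> * D"
  proof -
    have "ln D \<le> D - 1" using D2 by (intro ln_le_minus_one) simp
    then have "ln D / ln 2 \<le> D / ln 2" using l2 by (intro divide_right_mono) auto
    then have "log 2 D \<le> D / ln 2" by (simp add: log_def)
    moreover have "\<kappa> * D = (e / 2) * D + D + D / ln 2" by (simp add: \<kappa>_def algebra_simps)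
    moreover have "e \<le> (e / 2) * D" using D2 e mult_left_mono[of 2 D "e/2"] by simp
    ultimately show ?thesis using D2 by linarith
  qed
  have "log 2 D \<ge> 1" using D2 by simp
  then have lD0: "e + log 2 D > 0" using e by simp
  have "2 * x * D powr p * (e + log 2 D) powr q \<le> 2 * x * D powr p * (\<kappa> * D) powr q"
    using lD lD0 q xpos D2 by (intro mult_left_mono powr_mono2) auto
  also have "\<dots> = (2 * \<kappa> powr q) * x * D powr r"
    using D2 k0 by (simp add: r_def powr_add powr_mult)
  also have "\<dots> \<le> (2 * \<kappa> powr q) * x * (a' + u) powr r"
    using Dle D2 p q xpos k0 by (intro mult_left_mono powr_mono2) (auto simp: r_def)
  also have "\<dots> = (2 * \<kappa> powr q) * (2 powr (-u) * (a' + u) powr r)" by (simp add: x_def)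
  also have "\<dots> < (2 * \<kappa> powr q) * (c / (2 * \<kappa> powr q))"
    using u0[of u] k0 by (intro mult_strict_left_mono) (auto simp: u_def)
  also have "\<dots> = c" using k0 by simp
  finally show ?thesis using xpos x1 unfolding D_def by blast
qed

lemma log2_le_div: "y \<ge> 1 \<Longrightarrow> log 2 y \<le> y / ln 2"
proof -
  assume y: "y \<ge> 1"
  have "ln y \<le> y - 1" using y by (intro ln_le_minus_one) simp
  then have "ln y / ln 2 \<le> y / ln 2" by (intro divide_right_mono) auto
  then show ?thesis by (simp add: log_def)
qed

lemma KB:
  fixes n :: nat and m P x b Y :: real
  assumes n2: "n \<ge> 2" and P: "P \<ge> 0" and x: "x > 0" and b: "b > 0"
    and m1: "real n \<le> m" and m2: "m \<le> real n * (log 2 Y + 2)"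
    and Y1: "Y > 0" and Y2: "Y \<le> real n powr P * (b / x + 1)"
  defines "L \<equiv> log 2 (real n)" and "D \<equiv> P + 2 + log 2 (b / x + 1)"
  shows "m \<le> real n * L * D" "log 2 m \<le> L * ((1 + 1 / ln 2) + log 2 D)" "L \<ge> 1" "D \<ge> 2" "L \<le> log 2 m"
proof -
  have np: "real n > 0" using n2 by simp
  show l1: "L \<ge> 1" unfolding L_def using n2 by simp
  have "1 \<le> b / x + 1" using x b by simp
  then have a0: "log 2 (b / x + 1) \<ge> 0" using zero_le_log_cancel_iff[of 2 "b / x + 1"] by simp
  show D2: "D \<ge> 2" unfolding D_def using P a0 by simp
  have pos: "real n powr P * (b / x + 1) > 0" using np x b by (simp add: add_pos_pos)
  have "log 2 Y \<le> log 2 (real n powr P * (b / x + 1))" using Y1 Y2 pos by simp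
  also have "\<dots> = P * L + log 2 (b / x + 1)"
  proof -
    have bx: "b / x + 1 > 0" using \<open>1 \<le> b / x + 1\<close> by linarith
    have "log 2 (real n powr P * (b / x + 1)) = log 2 (real n powr P) + log 2 (b / x + 1)"
      using np bx by (simp add: log_mult)
    also have "log 2 (real n powr P) = P * L" unfolding L_def using np by (simp add: log_powr)
    finally show ?thesis .
  qed
  finally have lY: "log 2 Y \<le> P * L + log 2 (b / x + 1)" .
  have "P * L + log 2 (b / x + 1) + 2 \<le> L * D"
  proof -
    have "log 2 (b / x + 1) + 2 \<le> L * (log 2 (b / x + 1) + 2)"
      using l1 a0 mult_right_mono[of 1 L "log 2 (b / x + 1) + 2"] by simp
    then show ?thesis unfolding D_def by (simp add: algebra_simps)
  qed
  then have "log 2 Y + 2 \<le> L * D" using lY by linarith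
  then have "real n * (log 2 Y + 2) \<le> real n * (L * D)" using np by (intro mult_left_mono) auto
  then show mb: "m \<le> real n * L * D" using m2 by (simp add: mult.assoc)
  have mpos: "m > 0" using m1 np by linarith
  have "log 2 m \<le> log 2 (real n * L * D)" using mb mpos by simp
  also have "\<dots> = L + log 2 L + log 2 D"
  proof -
    have "L \<noteq> 0" "D \<noteq> 0" "real n \<noteq> 0" using l1 D2 np by auto
    then show ?thesis by (simp add: log_mult L_def)
  qed
  also have "\<dots> \<le> L + L / ln 2 + L * log 2 D"
  proof -
    have "log 2 L \<le> L / ln 2" using l1 by (rule log2_le_div)
    moreover have "log 2 D \<le> L * log 2 D"
      using l1 D2 mult_right_mono[of 1 L "log 2 D"] by simp
    ultimately show ?thesis by linarith
  qed
  also have "\<dots> = L * ((1 + 1 / ln 2) + log 2 D)" by (simp add: algebra_simps)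
  finally show "log 2 m \<le> L * ((1 + 1 / ln 2) + log 2 D)" .
  show "L \<le> log 2 m" unfolding L_def using m1 np by simp
qed

lemma log2_le_n: "n \<ge> 1 \<Longrightarrow> log 2 (real n) \<le> real n"
proof -
  assume n: "n \<ge> 1"
  have "real n < 2 ^ n" by (metis of_nat_less_numeral_power_cancel_iff less_exp)
  then have "real n < 2 powr (real n)" by (simp add: powr_realpow)
  then have "log 2 (real n) < log 2 (2 powr (real n))" using n by (subst log_less_cancel_iff) auto
  then show ?thesis by simp
qed

lemma part_i_lower:
  fixes K :: "'a::real_normed_vector set"
  assumes Kb: "bounded K" and g: "\<gamma> \<ge> 0" and al: "\<alpha> > 0" and C: "C > 0"
    and H: "\<forall>n::nat. n \<ge> 2 \<longrightarrow> entropy_number K n \<ge> C * (log 2 (real n)) powr \<beta> / real n powr \<alpha>"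
  shows "\<exists>C'>0. \<forall>n::nat. n \<ge> 2 \<longrightarrow> lipschitz_width \<gamma> K n \<ge>
           C' * (log 2 (real n)) powr \<beta> / (real n powr \<alpha> * (log 2 (real n)) powr \<alpha>)"
proof -
  define P where "P = 1 + \<alpha> + \<bar>\<alpha> - \<beta>\<bar>"
  define b where "b = 4 * (\<gamma> + 1)"
  define e where "e = 1 + 1 / ln (2::real)"
  have P0: "P \<ge> 0" using al by (simp add: P_def)
  have b0: "b > 0" using g by (simp add: b_def)
  have e0: "e \<ge> 0" by (simp add: e_def add_nonneg_nonneg)
  obtain x where x: "0 < x" "x \<le> 1"
    and xc: "2 * x * (P + 2 + log 2 (b / x + 1)) powr \<alpha> * (e + log 2 (P + 2 + log 2 (b / x + 1))) powr \<bar>\<beta>\<bar> < C"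
    using H2[of \<alpha> "\<bar>\<beta>\<bar>" P b C e] al P0 b0 C e0 by auto
  define D where "D = P + 2 + log 2 (b / x + 1)"
  define E where "E = e + log 2 D"
  show ?thesis
  proof (intro exI[of _ x] conjI allI impI)
    show "x > 0" by (rule x(1))
    fix n :: nat assume n2: "n \<ge> 2"
    define L where "L = log 2 (real n)"
    have np: "real n > 0" using n2 by simp
    have L1: "L \<ge> 1" unfolding L_def using n2 by simp
    define Z where "Z = L powr \<beta> / (real n powr \<alpha> * L powr \<alpha>)"
    have Z0: "Z > 0" unfolding Z_def using L1 np by simp
    define T where "T = x * Z"
    have T0: "T > 0" using x Z0 by (simp add: T_def)
    have "lipschitz_width \<gamma> K n \<ge> T"
    proof (rule LB3[OF Kb g _ T0])
      show "1 \<le> n" using n2 by simp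
      fix M :: nat
      assume M1: "real n \<le> real M" and M2: "real M \<le> real n * (log 2 (4 * real n * (\<gamma> + 1) / T + 1) + 2)"
      define Y where "Y = 4 * real n * (\<gamma> + 1) / T + 1"
      have Y0: "Y > 0" using g np T0 by (simp add: Y_def add_pos_pos)
      have Yb: "Y \<le> real n powr P * (b / x + 1)"
      proof -
        have LnP: "L powr (\<alpha> - \<beta>) \<le> real n powr \<bar>\<alpha> - \<beta>\<bar>"
        proof -
          have "L powr (\<alpha> - \<beta>) \<le> L powr \<bar>\<alpha> - \<beta>\<bar>" using L1 by (intro powr_mono) auto
          also have "\<dots> \<le> real n powr \<bar>\<alpha> - \<beta>\<bar>"
            using L1 log2_le_n[of n] n2 by (intro powr_mono2) (auto simp: L_def)
          finally show ?thesis .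
        qed
        have "4 * real n * (\<gamma> + 1) / T = (b / x) * (real n * real n powr \<alpha> * (L powr \<alpha> / L powr \<beta>))"
          using x np L1 by (simp add: T_def Z_def b_def field_simps)
        also have "real n * real n powr \<alpha> = real n powr (1 + \<alpha>)" using np by (simp add: powr_add)
        also have "L powr \<alpha> / L powr \<beta> = L powr (\<alpha> - \<beta>)" using L1 by (simp add: powr_diff)
        also have "(b / x) * (real n powr (1 + \<alpha>) * L powr (\<alpha> - \<beta>)) \<le> (b / x) * (real n powr (1 + \<alpha>) * real n powr \<bar>\<alpha> - \<beta>\<bar>)"
          using LnP b0 x by (intro mult_left_mono) auto
        also have "real n powr (1 + \<alpha>) * real n powr \<bar>\<alpha> - \<beta>\<bar> = real n powr P"
          using np by (simp add: P_def powr_add)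
        finally have "4 * real n * (\<gamma> + 1) / T \<le> b / x * real n powr P" .
        moreover have "1 \<le> real n powr P" using n2 P0 by (simp add: ge_one_powr_ge_zero)
        ultimately show ?thesis by (simp add: Y_def algebra_simps)
      qed
      note kb = KB[OF n2 P0 x(1) b0 M1 M2[folded Y_def] Y0 Yb, folded L_def D_def]
      define m where "m = real M"
      have m0: "m > 0" using M1 np by (simp add: m_def)
      have "log 2 D \<ge> 1" using kb(4) by simp
      then have E1: "E \<ge> 1" unfolding E_def using e0 by linarith
      have lm: "log 2 m \<ge> L" "log 2 m \<le> L * E" using kb(5) kb(2) by (simp_all add: m_def E_def e_def)
      have mD: "m powr \<alpha> \<le> real n powr \<alpha> * L powr \<alpha> * D powr \<alpha>"
      proof -
        have "m powr \<alpha> \<le> (real n * L * D) powr \<alpha>" using kb(1) m0 al by (intro powr_mono2) (auto simp: m_def)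
        also have "\<dots> = real n powr \<alpha> * L powr \<alpha> * D powr \<alpha>" using np L1 kb(4) by (simp add: powr_mult)
        finally show ?thesis .
      qed
      have lb: "(log 2 m) powr \<beta> \<ge> L powr \<beta> * E powr (- \<bar>\<beta>\<bar>)"
      proof (cases "\<beta> \<ge> 0")
        case True
        have "L powr \<beta> * E powr (- \<bar>\<beta>\<bar>) \<le> L powr \<beta> * 1"
          using E1 True L1 by (intro mult_left_mono) (auto simp: powr_minus_divide ge_one_powr_ge_zero)
        also have "\<dots> \<le> (log 2 m) powr \<beta>" using lm(1) L1 True by (simp add: powr_mono2)
        finally show ?thesis .
      next
        case False
        have "(L * E) powr \<beta> \<le> (log 2 m) powr \<beta>" using lm L1 False by (intro powr_mono2') auto
        moreover have "(L * E) powr \<beta> = L powr \<beta> * E powr (- \<bar>\<beta>\<bar>)" using False L1 E1 by (simp add: powr_mult)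
        ultimately show ?thesis by simp
      qed
      have key: "2 * x * D powr \<alpha> * E powr \<bar>\<beta>\<bar> < C" using xc unfolding D_def E_def .
      have Dp: "D powr \<alpha> > 0" "E powr \<bar>\<beta>\<bar> > 0" using kb(4) E1 by auto
      have "2 * T = 2 * x * Z" by (simp add: T_def)
      also have "\<dots> < (C / (D powr \<alpha> * E powr \<bar>\<beta>\<bar>)) * Z"
      proof -
        have "2 * x < C / (D powr \<alpha> * E powr \<bar>\<beta>\<bar>)" using key Dp by (simp add: field_simps)
        then show ?thesis using Z0 by (rule mult_strict_right_mono)
      qed
      also have "\<dots> = C * (L powr \<beta> * E powr (- \<bar>\<beta>\<bar>)) / (real n powr \<alpha> * L powr \<alpha> * D powr \<alpha>)"
        using Dp E1 by (simp add: Z_def powr_minus field_simps)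
      also have "\<dots> \<le> C * (log 2 m) powr \<beta> / m powr \<alpha>"
      proof (rule frac_le)
        show "0 \<le> C * (log 2 m) powr \<beta>" using C by simp
        show "C * (L powr \<beta> * E powr - \<bar>\<beta>\<bar>) \<le> C * log 2 m powr \<beta>" using lb C by simp
        show "0 < m powr \<alpha>" using m0 by simp
        show "m powr \<alpha> \<le> real n powr \<alpha> * L powr \<alpha> * D powr \<alpha>" by (rule mD)
      qed
      also have "\<dots> \<le> entropy_number K M" using H M1 n2 by (simp add: m_def)
      finally show "2 * T < entropy_number K M" .
    qed
    then show "x * log 2 (real n) powr \<beta> / (real n powr \<alpha> * log 2 (real n) powr \<alpha>) \<le> lipschitz_width \<gamma> K n"
      by (simp add: T_def Z_def L_def)
  qed
qed

lemma part_ii_lower: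
  fixes K :: "'a::real_normed_vector set"
  assumes Kb: "bounded K" and g: "\<gamma> \<ge> 0" and al: "\<alpha> > 0" and c: "c > 0"
    and H: "\<forall>n::nat. n \<ge> 2 \<longrightarrow> c * (log 2 (real n)) powr (-\<alpha>) \<le> entropy_number K n"
  shows "\<exists>x>0. \<forall>n::nat. n \<ge> 2 \<longrightarrow> x * (log 2 (real n)) powr (-\<alpha>) \<le> lipschitz_width \<gamma> K n"
proof -
  define P where "P = 1 + \<alpha>"
  define b where "b = 4 * (\<gamma> + 1)"
  define e where "e = 1 + 1 / ln (2::real)"
  have P0: "P \<ge> 0" using al by (simp add: P_def)
  have b0: "b > 0" using g by (simp add: b_def)
  have e0: "e \<ge> 0" by (simp add: e_def add_nonneg_nonneg)
  obtain x where x: "0 < x" "x \<le> 1"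
    and xc: "2 * x * (P + 2 + log 2 (b / x + 1)) powr 0 * (e + log 2 (P + 2 + log 2 (b / x + 1))) powr \<alpha> < c"
    using H2[of 0 \<alpha> P b c e] al P0 b0 c e0 by auto
  define D where "D = P + 2 + log 2 (b / x + 1)"
  define E where "E = e + log 2 D"
  show ?thesis
  proof (intro exI[of _ x] conjI allI impI)
    show "x > 0" by (rule x(1))
    fix n :: nat assume n2: "n \<ge> 2"
    define L where "L = log 2 (real n)"
    have np: "real n > 0" using n2 by simp
    have L1: "L \<ge> 1" unfolding L_def using n2 by simp
    define T where "T = x * L powr (-\<alpha>)"
    have T0: "T > 0" using x L1 by (simp add: T_def)
    have "lipschitz_width \<gamma> K n \<ge> T"
    proof (rule LB3[OF Kb g _ T0])
      show "1 \<le> n" using n2 by simp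
      fix M :: nat
      assume M1: "real n \<le> real M" and M2: "real M \<le> real n * (log 2 (4 * real n * (\<gamma> + 1) / T + 1) + 2)"
      define Y where "Y = 4 * real n * (\<gamma> + 1) / T + 1"
      have Y0: "Y > 0" using g np T0 by (simp add: Y_def add_pos_pos)
      have Yb: "Y \<le> real n powr P * (b / x + 1)"
      proof -
        have "4 * real n * (\<gamma> + 1) / T = (b / x) * (real n * L powr \<alpha>)"
          using x np L1 by (simp add: T_def b_def powr_minus field_simps)
        also have "\<dots> \<le> (b / x) * (real n * real n powr \<alpha>)"
          using L1 log2_le_n[of n] n2 b0 x np al
          by (intro mult_left_mono powr_mono2) (auto simp: L_def)
        also have "real n * real n powr \<alpha> = real n powr P" using np by (simp add: P_def powr_add)
        finally have "4 * real n * (\<gamma> + 1) / T \<le> b / x * real n powr P" .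
        moreover have "1 \<le> real n powr P" using n2 P0 by (simp add: ge_one_powr_ge_zero)
        ultimately show ?thesis by (simp add: Y_def algebra_simps)
      qed
      note kb = KB[OF n2 P0 x(1) b0 M1 M2[folded Y_def] Y0 Yb, folded L_def D_def]
      define m where "m = real M"
      have m0: "m > 0" using M1 np by (simp add: m_def)
      have "log 2 D \<ge> 1" using kb(4) by simp
      then have E1: "E \<ge> 1" unfolding E_def using e0 by linarith
      have lm: "log 2 m \<ge> L" "log 2 m \<le> L * E" using kb(5) kb(2) by (simp_all add: m_def E_def e_def)
      have key: "2 * x * E powr \<alpha> < c" using xc kb(4) unfolding D_def[symmetric] E_def[symmetric] by simp
      have "2 * T = (2 * x * E powr \<alpha>) * (L * E) powr (-\<alpha>)"
        using E1 L1 by (simp add: T_def powr_mult powr_minus field_simps)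
      also have "\<dots> < c * (L * E) powr (-\<alpha>)" using key L1 E1 by (intro mult_strict_right_mono) auto
      also have "\<dots> \<le> c * (log 2 m) powr (-\<alpha>)"
        using lm L1 E1 al c by (intro mult_left_mono powr_mono2') auto
      also have "\<dots> \<le> entropy_number K M" using H M1 n2 by (simp add: m_def)
      finally show "2 * T < entropy_number K M" .
    qed
    then show "x * log 2 (real n) powr - \<alpha> \<le> lipschitz_width \<gamma> K n" by (simp add: T_def L_def)
  qed
qed

lemma part_iii_lower:
  fixes K :: "'a::real_normed_vector set"
  assumes Kb: "bounded K" and g: "\<gamma> \<ge> 0" and al: "0 < \<alpha>" "\<alpha> < 1" and C: "C > 0" and c: "c > 0"
    and H: "\<forall>n::nat. n \<ge> 1 \<longrightarrow> entropy_number K n \<ge> C * 2 powr (- c * real n powr \<alpha>)"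
  shows "\<exists>C' c'. C' > 0 \<and> c' > 0 \<and> (\<forall>n::nat. n \<ge> 1 \<longrightarrow>
           lipschitz_width \<gamma> K n \<ge> C' * 2 powr (- c' * real n powr (\<alpha> / (1 - \<alpha>))))"
proof -
  define p where "p = \<alpha> / (1 - \<alpha>)"
  have p0: "p > 0" using al by (simp add: p_def)
  have pa: "\<alpha> + p * \<alpha> = p" using al by (simp add: p_def field_simps)
  define C' where "C' = C / 4"
  have C'0: "C' > 0" using C by (simp add: C'_def)
  define b where "b = 4 * (\<gamma> + 1)"
  have b0: "b > 0" using g by (simp add: b_def)
  define a0 where "a0 = log 2 (b / C' + 1)"
  have bC1: "1 \<le> b / C' + 1" using b0 C'0 by simp
  then have a00: "a0 \<ge> 0" unfolding a0_def using zero_le_log_cancel_iff[of 2 "b / C' + 1"] by simp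
  define K1 where "K1 = 1 / (p * ln 2)"
  have K10: "K1 > 0" using p0 by (simp add: K1_def)
  define G where "G = K1 + a0 + 2"
  have G0: "G > 0" using K10 a00 by (simp add: G_def)
  define c' where "c' = max G ((2 powr \<alpha> * c) powr (1 / (1 - \<alpha>)))"
  have c'G: "c' \<ge> G" by (simp add: c'_def)
  have c'0: "c' > 0" using G0 c'G by linarith
  have c'2: "c' \<ge> (2 powr \<alpha> * c) powr (1 / (1 - \<alpha>))" by (simp add: c'_def)
  have cc: "c * (G + c') powr \<alpha> \<le> c'"
  proof -
    have "(G + c') powr \<alpha> \<le> (2 * c') powr \<alpha>" using c'G G0 al by (intro powr_mono2) auto
    also have "\<dots> = 2 powr \<alpha> * c' powr \<alpha>" using c'0 by (simp add: powr_mult)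
    finally have "c * (G + c') powr \<alpha> \<le> c * (2 powr \<alpha> * c' powr \<alpha>)" using c by (intro mult_left_mono) auto
    also have "\<dots> = (2 powr \<alpha> * c) * c' powr \<alpha>" by simp
    also have "\<dots> \<le> c' powr (1 - \<alpha>) * c' powr \<alpha>"
    proof (rule mult_right_mono)
      have "2 powr \<alpha> * c = ((2 powr \<alpha> * c) powr (1 / (1 - \<alpha>))) powr (1 - \<alpha>)"
        using al c by (simp add: powr_powr)
      also have "\<dots> \<le> c' powr (1 - \<alpha>)" using c'2 al c by (intro powr_mono2) auto
      finally show "2 powr \<alpha> * c \<le> c' powr (1 - \<alpha>)" .
    qed simp
    also have "\<dots> = c'" using c'0 by (simp add: powr_add[symmetric])
    finally show ?thesis .
  qed
  show ?thesis
  proof (rule exI[of _ C'], rule exI[of _ c'], intro conjI allI impI)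
    show "C' > 0" by (rule C'0)
    show "c' > 0" by (rule c'0)
    fix n :: nat assume n1: "n \<ge> 1"
    have np: "real n \<ge> 1" using n1 by simp
    define N where "N = real n powr p"
    have N1: "N \<ge> 1" unfolding N_def using np p0 by (simp add: ge_one_powr_ge_zero)
    define T where "T = C' * 2 powr (- c' * N)"
    have T0: "T > 0" using C'0 by (simp add: T_def)
    have "lipschitz_width \<gamma> K n \<ge> T"
    proof (rule LB3[OF Kb g n1 T0])
      fix M :: nat
      assume M1: "real n \<le> real M" and M2: "real M \<le> real n * (log 2 (4 * real n * (\<gamma> + 1) / T + 1) + 2)"
      define m where "m = real M"
      have m0: "m > 0" using M1 np by (simp add: m_def)
      have lnN: "log 2 (real n) \<le> K1 * N"
      proof -
        have "ln (real n powr p) \<le> real n powr p - 1" using np by (intro ln_le_minus_one) simp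
        then have "p * ln (real n) \<le> N" using np by (simp add: N_def ln_powr)
        then have "ln (real n) \<le> N / p" using p0 by (simp add: field_simps)
        then have "ln (real n) / ln 2 \<le> N / p / ln 2" by (intro divide_right_mono) auto
        then show ?thesis by (simp add: log_def K1_def field_simps)
      qed
      have Yb: "4 * real n * (\<gamma> + 1) / T + 1 \<le> real n * 2 powr (c' * N) * (b / C' + 1)"
      proof -
        have "4 * real n * (\<gamma> + 1) / T = real n * 2 powr (c' * N) * (b / C')"
          using C'0 by (simp add: T_def b_def powr_minus field_simps)
        moreover have "1 \<le> real n * 2 powr (c' * N)"
        proof -
          have "1 \<le> 2 powr (c' * N)" using c'0 N1 by (simp add: ge_one_powr_ge_zero)
          then show ?thesis using np by (metis mult_mono' mult_1 zero_le_one)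
        qed
        ultimately show ?thesis by (simp add: algebra_simps)
      qed
      have Ypos: "4 * real n * (\<gamma> + 1) / T + 1 > 0" using T0 g np by (simp add: add_pos_pos)
      have "log 2 (4 * real n * (\<gamma> + 1) / T + 1) \<le> log 2 (real n * 2 powr (c' * N) * (b / C' + 1))"
        using Yb Ypos by simp
      also have "\<dots> = log 2 (real n) + c' * N + a0"
      proof -
        have "b / C' + 1 \<noteq> 0" using bC1 by linarith
        then show ?thesis using np by (simp add: log_mult a0_def)
      qed
      finally have lY: "log 2 (4 * real n * (\<gamma> + 1) / T + 1) \<le> log 2 (real n) + c' * N + a0" .
      have "m \<le> real n * (K1 * N + c' * N + a0 + 2)"
        using M2 lY lnN np unfolding m_def by (smt (verit) mult_left_mono)
      also have "\<dots> \<le> real n * (N * (G + c'))"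
      proof -
        have "a0 + 2 \<le> N * (a0 + 2)" using N1 a00 mult_right_mono[of 1 N "a0 + 2"] by simp
        then have "K1 * N + c' * N + a0 + 2 \<le> N * (G + c')" by (simp add: G_def algebra_simps)
        then show ?thesis using np by (intro mult_left_mono) auto
      qed
      finally have mb: "m \<le> real n * N * (G + c')" by (simp add: mult.assoc)
      have "m powr \<alpha> \<le> (real n * N * (G + c')) powr \<alpha>" using mb m0 al by (intro powr_mono2) auto
      also have "\<dots> = real n powr \<alpha> * N powr \<alpha> * (G + c') powr \<alpha>"
        using np N1 G0 c'0 by (simp add: powr_mult)
      also have "real n powr \<alpha> * N powr \<alpha> = N"
        using np by (simp add: N_def powr_powr powr_add[symmetric] pa)
      finally have mN: "m powr \<alpha> \<le> N * (G + c') powr \<alpha>" .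
      have "c * m powr \<alpha> \<le> c' * N"
      proof -
        have "c * m powr \<alpha> \<le> c * (N * (G + c') powr \<alpha>)" using mN c by (intro mult_left_mono) auto
        also have "\<dots> = N * (c * (G + c') powr \<alpha>)" by simp
        also have "\<dots> \<le> N * c'" using cc N1 by (intro mult_left_mono) auto
        also have "\<dots> = c' * N" by (rule mult.commute)
        finally show ?thesis .
      qed
      then have "2 powr (- c' * N) \<le> 2 powr (- c * m powr \<alpha>)" by (intro powr_mono) auto
      then have "C * 2 powr (- c' * N) \<le> C * 2 powr (- c * m powr \<alpha>)" using C by (intro mult_left_mono) auto
      moreover have "2 * T < C * 2 powr (- c' * N)" using C by (simp add: T_def C'_def)
      moreover have "C * 2 powr (- c * m powr \<alpha>) \<le> entropy_number K M"
        using H M1 n1 by (simp add: m_def)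
      ultimately show "2 * T < entropy_number K M" by linarith
    qed
    then show "C' * 2 powr (- c' * real n powr (\<alpha> / (1 - \<alpha>))) \<le> lipschitz_width \<gamma> K n"
      by (simp add: T_def N_def p_def)
  qed
qed

theorem corollary4p8:
  fixes K :: "'a::banach set" and \<gamma> :: real
  assumes "compact K" and "\<gamma> \<ge> 2 * rad K"
  shows
   "(\<forall>\<alpha> \<beta> C. \<alpha> > 0 \<longrightarrow>
       (\<forall>n::nat. n \<ge> 2 \<longrightarrow> entropy_number K n \<le> C * (log 2 (real n)) powr \<beta> / real n powr \<alpha>) \<longrightarrow>
       (\<forall>n::nat. n \<ge> 2 \<longrightarrow> lipschitz_width \<gamma> K n \<le> C * (log 2 (real n)) powr \<beta> / real n powr \<alpha>))
  \<and> (\<forall>\<alpha> \<beta> C. \<alpha> > 0 \<longrightarrow> C > 0 \<longrightarrow>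
       (\<forall>n::nat. n \<ge> 2 \<longrightarrow> entropy_number K n \<ge> C * (log 2 (real n)) powr \<beta> / real n powr \<alpha>) \<longrightarrow>
       (\<exists>C'>0. \<forall>n::nat. n \<ge> 2 \<longrightarrow> lipschitz_width \<gamma> K n \<ge>
           C' * (log 2 (real n)) powr \<beta> / (real n powr \<alpha> * (log 2 (real n)) powr \<alpha>)))
  \<and> (\<forall>\<alpha>. \<alpha> > 0 \<longrightarrow>
       (\<exists>c C. 0 < c \<and> c \<le> C \<and> (\<forall>n::nat. n \<ge> 2 \<longrightarrow>
           c * (log 2 (real n)) powr (-\<alpha>) \<le> entropy_number K n \<and>
           entropy_number K n \<le> C * (log 2 (real n)) powr (-\<alpha>))) \<longrightarrow>
       (\<exists>c C. 0 < c \<and> c \<le> C \<and> (\<forall>n::nat. n \<ge> 2 \<longrightarrow>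
           c * (log 2 (real n)) powr (-\<alpha>) \<le> lipschitz_width \<gamma> K n \<and>
           lipschitz_width \<gamma> K n \<le> C * (log 2 (real n)) powr (-\<alpha>))))
  \<and> (\<forall>\<alpha> C c. 0 < \<alpha> \<longrightarrow> \<alpha> < 1 \<longrightarrow>
       (\<forall>n::nat. n \<ge> 1 \<longrightarrow> entropy_number K n \<le> C * 2 powr (- c * real n powr \<alpha>)) \<longrightarrow>
       (\<forall>n::nat. n \<ge> 1 \<longrightarrow> lipschitz_width \<gamma> K n \<le> C * 2 powr (- c * real n powr \<alpha>)))
  \<and> (\<forall>\<alpha> C c. 0 < \<alpha> \<longrightarrow> \<alpha> < 1 \<longrightarrow> C > 0 \<longrightarrow> c > 0 \<longrightarrow>
       (\<forall>n::nat. n \<ge> 1 \<longrightarrow> entropy_number K n \<ge> C * 2 powr (- c * real n powr \<alpha>)) \<longrightarrow>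
       (\<exists>C' c'. C' > 0 \<and> c' > 0 \<and> (\<forall>n::nat. n \<ge> 1 \<longrightarrow>
           lipschitz_width \<gamma> K n \<ge> C' * 2 powr (- c' * real n powr (\<alpha> / (1 - \<alpha>))))))"
proof -
  have Kb: "bounded K" using assms(1) by (rule compact_imp_bounded)
  have g0: "\<gamma> \<ge> 0" using rad_nonneg[OF Kb] assms(2) by linarith
  have UB: "lipschitz_width \<gamma> K n \<le> entropy_number K n" if "n \<ge> 1" for n
    by (rule upper_main[OF Kb that assms(2)])
  show ?thesis
  proof (intro conjI)
    show "\<forall>\<alpha> \<beta> C. \<alpha> > 0 \<longrightarrow>
       (\<forall>n::nat. n \<ge> 2 \<longrightarrow> entropy_number K n \<le> C * (log 2 (real n)) powr \<beta> / real n powr \<alpha>) \<longrightarrow>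
       (\<forall>n::nat. n \<ge> 2 \<longrightarrow> lipschitz_width \<gamma> K n \<le> C * (log 2 (real n)) powr \<beta> / real n powr \<alpha>)"
    proof (intro allI impI)
      fix \<alpha> \<beta> C and n :: nat
      assume H: "\<forall>n::nat. n \<ge> 2 \<longrightarrow> entropy_number K n \<le> C * (log 2 (real n)) powr \<beta> / real n powr \<alpha>"
        and n: "n \<ge> 2"
      have "lipschitz_width \<gamma> K n \<le> entropy_number K n" using n by (intro UB) simp
      also have "\<dots> \<le> C * (log 2 (real n)) powr \<beta> / real n powr \<alpha>" using H n by simp
      finally show "lipschitz_width \<gamma> K n \<le> C * (log 2 (real n)) powr \<beta> / real n powr \<alpha>" .
    qed
  next
    show "\<forall>\<alpha> \<beta> C. \<alpha> > 0 \<longrightarrow> C > 0 \<longrightarrow>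
       (\<forall>n::nat. n \<ge> 2 \<longrightarrow> entropy_number K n \<ge> C * (log 2 (real n)) powr \<beta> / real n powr \<alpha>) \<longrightarrow>
       (\<exists>C'>0. \<forall>n::nat. n \<ge> 2 \<longrightarrow> lipschitz_width \<gamma> K n \<ge>
           C' * (log 2 (real n)) powr \<beta> / (real n powr \<alpha> * (log 2 (real n)) powr \<alpha>))"
      using part_i_lower[OF Kb g0] by blast
  next
    show "\<forall>\<alpha>. \<alpha> > 0 \<longrightarrow>
       (\<exists>c C. 0 < c \<and> c \<le> C \<and> (\<forall>n::nat. n \<ge> 2 \<longrightarrow>
           c * (log 2 (real n)) powr (-\<alpha>) \<le> entropy_number K n \<and>
           entropy_number K n \<le> C * (log 2 (real n)) powr (-\<alpha>))) \<longrightarrow>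
       (\<exists>c C. 0 < c \<and> c \<le> C \<and> (\<forall>n::nat. n \<ge> 2 \<longrightarrow>
           c * (log 2 (real n)) powr (-\<alpha>) \<le> lipschitz_width \<gamma> K n \<and>
           lipschitz_width \<gamma> K n \<le> C * (log 2 (real n)) powr (-\<alpha>)))"
    proof (intro allI impI)
      fix \<alpha> :: real assume al: "\<alpha> > 0"
      assume "\<exists>c C. 0 < c \<and> c \<le> C \<and> (\<forall>n::nat. n \<ge> 2 \<longrightarrow>
           c * (log 2 (real n)) powr (-\<alpha>) \<le> entropy_number K n \<and>
           entropy_number K n \<le> C * (log 2 (real n)) powr (-\<alpha>))"
      then obtain c C where c: "0 < c" "c \<le> C" and HH: "\<forall>n::nat. n \<ge> 2 \<longrightarrow>
           c * (log 2 (real n)) powr (-\<alpha>) \<le> entropy_number K n \<and>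
           entropy_number K n \<le> C * (log 2 (real n)) powr (-\<alpha>)" by blast
      have Hl: "\<forall>n::nat. n \<ge> 2 \<longrightarrow> c * (log 2 (real n)) powr (-\<alpha>) \<le> entropy_number K n"
        using HH by blast
      obtain x where x: "x > 0" and xl: "\<forall>n::nat. n \<ge> 2 \<longrightarrow> x * (log 2 (real n)) powr (-\<alpha>) \<le> lipschitz_width \<gamma> K n"
        using part_ii_lower[OF Kb g0 al c(1) Hl] by blast
      show "\<exists>c C. 0 < c \<and> c \<le> C \<and> (\<forall>n::nat. n \<ge> 2 \<longrightarrow>
           c * (log 2 (real n)) powr (-\<alpha>) \<le> lipschitz_width \<gamma> K n \<and>
           lipschitz_width \<gamma> K n \<le> C * (log 2 (real n)) powr (-\<alpha>))"
      proof (rule exI[of _ "min x C"], rule exI[of _ C], intro conjI allI impI)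
        show "0 < min x C" using x c by simp
        show "min x C \<le> C" by simp
        fix n :: nat assume n: "n \<ge> 2"
        have "min x C * (log 2 (real n)) powr (-\<alpha>) \<le> x * (log 2 (real n)) powr (-\<alpha>)"
          by (intro mult_right_mono) auto
        also have "\<dots> \<le> lipschitz_width \<gamma> K n" using xl n by blast
        finally show "min x C * (log 2 (real n)) powr (-\<alpha>) \<le> lipschitz_width \<gamma> K n" .
        have "lipschitz_width \<gamma> K n \<le> entropy_number K n" using n by (intro UB) simp
        also have "\<dots> \<le> C * (log 2 (real n)) powr (-\<alpha>)" using HH n by blast
        finally show "lipschitz_width \<gamma> K n \<le> C * (log 2 (real n)) powr (-\<alpha>)" .
      qed
    qed
  next
    show "\<forall>\<alpha> C c. 0 < \<alpha> \<longrightarrow> \<alpha> < 1 \<longrightarrow>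
       (\<forall>n::nat. n \<ge> 1 \<longrightarrow> entropy_number K n \<le> C * 2 powr (- c * real n powr \<alpha>)) \<longrightarrow>
       (\<forall>n::nat. n \<ge> 1 \<longrightarrow> lipschitz_width \<gamma> K n \<le> C * 2 powr (- c * real n powr \<alpha>))"
    proof (intro allI impI)
      fix \<alpha> C c :: real and n :: nat
      assume H: "\<forall>n::nat. n \<ge> 1 \<longrightarrow> entropy_number K n \<le> C * 2 powr (- c * real n powr \<alpha>)"
        and n: "n \<ge> 1"
      have "lipschitz_width \<gamma> K n \<le> entropy_number K n" using n by (rule UB)
      also have "\<dots> \<le> C * 2 powr (- c * real n powr \<alpha>)" using H n by simp
      finally show "lipschitz_width \<gamma> K n \<le> C * 2 powr (- c * real n powr \<alpha>)" .
    qed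
  next
    show "\<forall>\<alpha> C c. 0 < \<alpha> \<longrightarrow> \<alpha> < 1 \<longrightarrow> C > 0 \<longrightarrow> c > 0 \<longrightarrow>
       (\<forall>n::nat. n \<ge> 1 \<longrightarrow> entropy_number K n \<ge> C * 2 powr (- c * real n powr \<alpha>)) \<longrightarrow>
       (\<exists>C' c'. C' > 0 \<and> c' > 0 \<and> (\<forall>n::nat. n \<ge> 1 \<longrightarrow>
           lipschitz_width \<gamma> K n \<ge> C' * 2 powr (- c' * real n powr (\<alpha> / (1 - \<alpha>)))))"
      using part_iii_lower[OF Kb g0] by blast
  qed
qed

end
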